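(* Let $q\ge2$ and $s\ge2$ an even integer, and suppose Assumptions A1, A2$(s,\mu)$, A3$(s,q)$ hold. Let $\alpha>0$ and let $\{\boldsymbol\beta_k\}$ be the SGD sequence with a deterministic initialization $\boldsymbol\beta_0$. Then for all $k\ge1$, $$\big\||\boldsymbol\beta_k-\boldsymbol\beta^*|_s\big\|_q^2\le\big(1-2\alpha\mu+7\max\{q,s\}\alpha^2L_{s,q}^2\big)\big\||\boldsymbol\beta_{k-1}-\boldsymbol\beta^*|_s\big\|_q^2+3\max\{q,s\}\alpha^2M_{s,q}^2.$$ If moreover $\alpha<\alpha_{s,q}$, the same inequality holds with $\boldsymbol\beta_k,\boldsymbol\beta_{k-1}$ replaced by the stationary iterates $\boldsymbol\beta_k^\circ,\boldsymbol\beta_{k-1}^\circ$.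
   Context: Standing setup. Let $d\ge1$. Let $\bm\xi,\bm\xi_1,\bm\xi_2,\ldots$ be i.i.d. random elements with law $\Pi$ on a measurable space, and let $g(\boldsymbol\beta,\bm\xi)$ be real valued and differentiable in $\boldsymbol\beta\in\mathbb R^d$ with gradient $\nabla g(\boldsymbol\beta,\bm\xi)$ (w.r.t. $\boldsymbol\beta$). Let $G(\boldsymbol\beta)=\mathbb E\,g(\boldsymbol\beta,\bm\xi)$, assumed differentiable with $\nabla G(\boldsymbol\beta)=\mathbb E\,\nabla g(\boldsymbol\beta,\bm\xi)$. For a constant learning rate $\alpha>0$ and initialization $\boldsymbol\beta_0$, the SGD iterates are $\boldsymbol\beta_k=\boldsymbol\beta_{k-1}-\alpha\nabla g(\boldsymbol\beta_{k-1},\bm\xi_k)$, $k\ge1$. Notation: $|\bm v|_s=(\sum_{i=1}^d|v_i|^s)^{1/s}$ for $s\ge1$, $|\bm v|_\infty=\max_i|v_i|$; for a random variable $X$, $\|X\|_q=(\mathbb E|X|^q)^{1/q}$; for a vector $\bm v$ and integer $m$, $\bm v^{\odot m}=(v_1^m,\ldots,v_d^m)^\top$. Assumption A1 (coercivity): $G(\boldsymbol\beta_n)\to\infty$ for every sequence with $|\boldsymbol\beta_n|_s\to\infty$. Assumption A2$(s,\mu)$ ($\ell^s$-strong convexity; $s\ge2$ even, $\mu>0$): $\langle(\boldsymbol\beta-\boldsymbol\beta')^{\odot(s-1)},\nabla G(\boldsymbol\beta)-\nabla G(\boldsymbol\beta')\rangle\ge\mu|\boldsymbol\beta-\boldsymbol\beta'|_s^s$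 for all $\boldsymbol\beta,\boldsymbol\beta'\in\mathbb R^d$. Under A1 and A2, $G$ has a unique global minimizer $\boldsymbol\beta^*$. Assumption A3$(s,q)$ ($q\ge2$, $s\ge2$ even): $M_{s,q}:=\big\||\nabla g(\boldsymbol\beta^*,\bm\xi)|_s\big\|_q<\infty$ and there is $L_{s,q}>0$ with $\big\||\nabla g(\boldsymbol\beta,\bm\xi)-\nabla g(\boldsymbol\beta',\bm\xi)|_s\big\|_q\le L_{s,q}|\boldsymbol\beta-\boldsymbol\beta'|_s$ for all $\boldsymbol\beta,\boldsymbol\beta'$. Constants: $\alpha_{s,q}:=\dfrac{2\mu}{\max\{q,s\}L_{s,q}^2}$ and $r_{\alpha,s,q}:=1-2\mu\alpha+\max\{q,s\}L_{s,q}^2\alpha^2$. Stationary iterates: for $0<\alpha<\alpha_{s,q}$ there is a unique invariant law $\pi_\alpha$ of the SGD Markov chain (with $\int|\bm u|_s^q\pi_\alpha(d\bm u)<\infty$). Let $\boldsymbol\beta_0^\circ\sim\pi_\alpha$ be independent of $(\bm\xi_k)_{k\ge1}$ and $\boldsymbol\beta_k^\circ=\boldsymbol\beta_{k-1}^\circ-\alpha\nabla g(\boldsymbol\beta_{k-1}^\circ,\bm\xi_k)$, $k\ge1$ (same samples $\bm\xi_k$ as the SGD sequence); then $\boldsymbol\beta_k^\circ\sim\pi_\alpha$ for all $k$. *)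

theory Defs
  imports "HOL-Probability.Probability"
begin

definition lsnorm :: "nat \<Rightarrow> real^'d \<Rightarrow> real" where
  "lsnorm s v = (\<Sum>i\<in>UNIV. \<bar>v $ i\<bar> ^ s) powr (1 / real s)"

definition odot_pow :: "real^'d \<Rightarrow> nat \<Rightarrow> real^'d" where
  "odot_pow v m = (\<chi> i. (v $ i) ^ m)"

text \<open>L^q norm of a real random variable (meaningful when |X|^q is integrable).\<close>
definition lq_norm :: "'a measure \<Rightarrow> real \<Rightarrow> ('a \<Rightarrow> real) \<Rightarrow> real" where
  "lq_norm M q X = (\<integral>\<omega>. \<bar>X \<omega>\<bar> powr q \<partial>M) powr (1 / q)"

fun sgd :: "(real^'d \<Rightarrow> 'x \<Rightarrow> real^'d) \<Rightarrow> real \<Rightarrow> (nat \<Rightarrow> 'a \<Rightarrow> 'x)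
            \<Rightarrow> ('a \<Rightarrow> real^'d) \<Rightarrow> nat \<Rightarrow> 'a \<Rightarrow> real^'d" where
  "sgd dg \<alpha> \<xi> b0 0 \<omega> = b0 \<omega>"
| "sgd dg \<alpha> \<xi> b0 (Suc k) \<omega> = sgd dg \<alpha> \<xi> b0 k \<omega> - \<alpha> *\<^sub>R dg (sgd dg \<alpha> \<xi> b0 k \<omega>) (\<xi> (Suc k) \<omega>)"

end

theory Submission
  imports Defs
begin

lemma holder_sum:
  fixes f g :: "'i \<Rightarrow> real"
  assumes I: "finite I" and p: "p > 1" and p': "p' > 1" and pq: "1/p + 1/p' = 1"
    and f: "\<And>i. i \<in> I \<Longrightarrow> f i \<ge> 0" and g: "\<And>i. i \<in> I \<Longrightarrow> g i \<ge> 0"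
  shows "(\<Sum>i\<in>I. f i * g i) \<le> (\<Sum>i\<in>I. f i powr p) powr (1/p) * (\<Sum>i\<in>I. g i powr p') powr (1/p')"
proof -
  define A where "A = (\<Sum>i\<in>I. f i powr p)"
  define B where "B = (\<Sum>i\<in>I. g i powr p')"
  have A0: "A \<ge> 0" "B \<ge> 0" unfolding A_def B_def by (auto intro: sum_nonneg)
  show ?thesis
  proof (cases "A = 0 \<or> B = 0")
    case True
    then show ?thesis
    proof
      assume "A = 0"
      then have "\<forall>i\<in>I. f i powr p = 0" unfolding A_def using I by (subst sum_nonneg_eq_0_iff[symmetric]) auto
      then have "\<forall>i\<in>I. f i = 0" by simp
      then show ?thesis using A0 by (simp add: A_def B_def)
    next
      assume "B = 0"
      then have "\<forall>i\<in>I. g i powr p' = 0" unfolding B_def using I by (subst sum_nonneg_eq_0_iff[symmetric]) auto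
      then have "\<forall>i\<in>I. g i = 0" by simp
      then show ?thesis using A0 by (simp add: A_def B_def)
    qed
  next
    case False
    then have Ap: "A > 0" "B > 0" using A0 by auto
    define a where "a = A powr (1/p)"
    define b where "b = B powr (1/p')"
    have ab: "a > 0" "b > 0" using Ap by (auto simp: a_def b_def)
    have ap: "a powr p = A" using Ap p by (simp add: a_def powr_powr)
    have bp: "b powr p' = B" using Ap p' by (simp add: b_def powr_powr)
    have "(\<Sum>i\<in>I. (f i / a) * (g i / b)) \<le> (\<Sum>i\<in>I. (f i / a) powr p / p + (g i / b) powr p' / p')"
      using f g ab by (intro sum_mono Youngs_inequality[OF p p' pq]) auto
    also have "\<dots> = (\<Sum>i\<in>I. f i powr p) / A / p + (\<Sum>i\<in>I. g i powr p') / B / p'"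
      using f g ab ap bp by (simp add: sum.distrib powr_divide sum_divide_distrib)
    also have "\<dots> = 1" using Ap pq by (simp add: A_def[symmetric] B_def[symmetric])
    finally have "(\<Sum>i\<in>I. f i * g i) / (a * b) \<le> 1"
      by (simp add: sum_divide_distrib)
    then show ?thesis using ab by (simp add: a_def[symmetric] b_def[symmetric] A_def[symmetric] B_def[symmetric] divide_le_eq)
  qed
qed

lemma powr_nat_abs: "n > 0 \<Longrightarrow> \<bar>x::real\<bar> powr real n = \<bar>x\<bar> ^ n"
  by (cases "x = 0") (auto simp: powr_realpow)

lemma powr_nat_nonneg: "n > 0 \<Longrightarrow> (x::real) \<ge> 0 \<Longrightarrow> x powr real n = x ^ n"
  by (cases "x = 0") (auto simp: powr_realpow)

lemma power_minus_mult_Suc[simp]: "0 < n \<Longrightarrow> (a::'a::monoid_mult) ^ (n - Suc 0) * a = a ^ n"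
  using power_minus_mult[of n a] by simp

lemma lsnorm_nonneg: "lsnorm s v \<ge> 0"
  by (simp add: lsnorm_def)

lemma lsnorm_pow:
  assumes "s > 0"
  shows "lsnorm s v ^ s = (\<Sum>i\<in>UNIV. \<bar>v $ i\<bar> ^ s)"
proof -
  have "lsnorm s v ^ s = lsnorm s v powr real s"
    using assms by (simp add: powr_nat_nonneg lsnorm_nonneg)
  also have "\<dots> = (\<Sum>i\<in>UNIV. \<bar>v $ i\<bar> ^ s)"
    using assms unfolding lsnorm_def by (simp add: powr_powr sum_nonneg)
  finally show ?thesis .
qed

lemma lsnorm_pow_even:
  assumes "s > 0" "even s"
  shows "lsnorm s v ^ s = (\<Sum>i\<in>UNIV. (v $ i) ^ s)"
  using lsnorm_pow[OF assms(1)] assms(2) by (simp add: power_even_abs)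

lemma lsnorm_eq_iff:
  assumes "s > 0" "x \<ge> 0"
  shows "lsnorm s v = x \<longleftrightarrow> (\<Sum>i\<in>UNIV. \<bar>v $ i\<bar> ^ s) = x ^ s"
  using lsnorm_pow[OF assms(1), of v] assms lsnorm_nonneg[of s v]
  by (metis power_eq_iff_eq_base)

lemma lsnorm_le_iff:
  assumes "s > 0" "x \<ge> 0"
  shows "lsnorm s v \<le> x \<longleftrightarrow> (\<Sum>i\<in>UNIV. \<bar>v $ i\<bar> ^ s) \<le> x ^ s"
  using lsnorm_pow[OF assms(1), of v] assms lsnorm_nonneg[of s v]
  by (metis power_mono_iff)

lemma lsnorm_scale:
  assumes "s > 0"
  shows "lsnorm s (c *\<^sub>R v) = \<bar>c\<bar> * lsnorm s v"
proof -
  have "(\<Sum>i\<in>UNIV. \<bar>(c *\<^sub>R v) $ i\<bar> ^ s) = \<bar>c\<bar>^s * (\<Sum>i\<in>UNIV. \<bar>v $ i\<bar> ^ s)"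
    by (simp add: abs_mult power_mult_distrib sum_distrib_left)
  also have "\<dots> = (\<bar>c\<bar> * lsnorm s v) ^ s"
    by (simp only: power_mult_distrib lsnorm_pow[OF assms])
  finally have e: "lsnorm s (c *\<^sub>R v) ^ s = (\<bar>c\<bar> * lsnorm s v) ^ s"
    using lsnorm_pow[OF assms, of "c *\<^sub>R v"] by simp
  show ?thesis by (rule power_eq_imp_eq_base[OF e]) (use assms in \<open>auto simp: lsnorm_nonneg\<close>)
qed

lemma lsnorm_zero[simp]: "s > 0 \<Longrightarrow> lsnorm s 0 = 0"
  by (simp add: lsnorm_def)

lemma lsnorm_eq_0_iff:
  assumes "s > 0"
  shows "lsnorm s v = 0 \<longleftrightarrow> v = 0"
proof
  assume "lsnorm s v = 0"
  then have "(\<Sum>i\<in>UNIV. \<bar>v $ i\<bar> ^ s) = 0" using lsnorm_eq_iff[OF assms, of 0 v] assms by (simp add: zero_power)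
  then have "\<forall>i. \<bar>v $ i\<bar> ^ s = 0" by (subst (asm) sum_nonneg_eq_0_iff) auto
  then show "v = 0" using assms by (auto simp: vec_eq_iff)
qed (use assms in simp)

lemma lsnorm_minus: "s > 0 \<Longrightarrow> lsnorm s (- v) = lsnorm s v"
  by (simp add: lsnorm_def)

lemma lsnorm_comp_le:
  assumes "s > 0"
  shows "\<bar>v $ i\<bar> \<le> lsnorm s v"
proof -
  have "\<bar>v $ i\<bar> ^ s \<le> (\<Sum>j\<in>UNIV. \<bar>v $ j\<bar> ^ s)"
    by (rule member_le_sum) auto
  then show ?thesis using lsnorm_pow[OF assms, of v]
    by (metis abs_ge_zero assms lsnorm_nonneg power_le_imp_le_base gr0_implies_Suc)
qed

lemma holder_ls1:
  assumes s: "s \<ge> 2"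
  shows "(\<Sum>i\<in>UNIV. \<bar>x $ i\<bar> ^ (s - 1) * \<bar>u $ i\<bar>) \<le> lsnorm s x ^ (s - 1) * lsnorm s u"
proof -
  have s0: "s > 0" "s > 1" using s by auto
  have p: "real s / real (s - 1) > 1" "real s > 1" using s by (auto simp: of_nat_diff)
  have pq: "1 / (real s / real (s - 1)) + 1 / real s = 1" using s by (simp add: of_nat_diff field_simps)
  have "(\<Sum>i\<in>UNIV. \<bar>x $ i\<bar> ^ (s - 1) * \<bar>u $ i\<bar>) \<le>
      (\<Sum>i\<in>UNIV. (\<bar>x $ i\<bar> ^ (s - 1)) powr (real s / real (s - 1))) powr (1 / (real s / real (s - 1)))
      * (\<Sum>i\<in>UNIV. \<bar>u $ i\<bar> powr real s) powr (1 / real s)"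
    by (rule holder_sum[OF _ p pq]) auto
  also have "(\<Sum>i\<in>UNIV. (\<bar>x $ i\<bar> ^ (s - 1)) powr (real s / real (s - 1))) = (\<Sum>i\<in>UNIV. \<bar>x $ i\<bar> ^ s)"
  proof (rule sum.cong)
    fix i :: 'a
    have "(\<bar>x $ i\<bar> ^ (s - 1)) powr (real s / real (s - 1)) = (\<bar>x $ i\<bar> powr real (s - 1)) powr (real s / real (s - 1))"
      using s0 powr_nat_abs[of "s - 1" "x $ i"] powr_nat_abs[of "s - 2" "x $ i"] by simp
    also have "\<dots> = \<bar>x $ i\<bar> powr real s" using s0 by (simp add: powr_powr)
    also have "\<dots> = \<bar>x $ i\<bar> ^ s" using s0 by (simp add: powr_nat_abs)
    finally show "(\<bar>x $ i\<bar> ^ (s - 1)) powr (real s / real (s - 1)) = \<bar>x $ i\<bar> ^ s" .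
  qed simp
  also have "(\<Sum>i\<in>UNIV. \<bar>x $ i\<bar> ^ s) powr (1 / (real s / real (s - 1))) = lsnorm s x ^ (s - 1)"
  proof -
    have "lsnorm s x ^ (s - 1) = lsnorm s x powr real (s - 1)"
      using s0 powr_nat_nonneg[of "s - 1" "lsnorm s x"] lsnorm_nonneg[of s x] by simp
    also have "\<dots> = (\<Sum>i\<in>UNIV. \<bar>x $ i\<bar> ^ s) powr (1 / (real s / real (s - 1)))"
      unfolding lsnorm_def by (simp add: powr_powr)
    finally show ?thesis by simp
  qed
  also have "(\<Sum>i\<in>UNIV. \<bar>u $ i\<bar> powr real s) powr (1 / real s) = lsnorm s u"
    using s0 by (simp add: lsnorm_def powr_nat_abs)
  finally show ?thesis .
qed

lemma holder_ls1':
  assumes s: "s \<ge> 2" "even s"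
  shows "\<bar>\<Sum>i\<in>UNIV. (x $ i) ^ (s - 1) * u $ i\<bar> \<le> lsnorm s x ^ (s - 1) * lsnorm s u"
proof -
  have "\<bar>\<Sum>i\<in>UNIV. (x $ i) ^ (s - 1) * u $ i\<bar> \<le> (\<Sum>i\<in>UNIV. \<bar>(x $ i) ^ (s - 1) * u $ i\<bar>)"
    by (rule sum_abs)
  also have "\<dots> = (\<Sum>i\<in>UNIV. \<bar>x $ i\<bar> ^ (s - 1) * \<bar>u $ i\<bar>)"
    by (simp add: abs_mult power_abs)
  finally show ?thesis using holder_ls1[OF s(1), of x u] by linarith
qed

lemma holder_ls2:
  assumes s: "s \<ge> 2" "even s"
  shows "(\<Sum>i\<in>UNIV. (x $ i) ^ (s - 2) * (u $ i)^2) \<le> lsnorm s x ^ (s - 2) * lsnorm s u ^ 2"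
proof (cases "s = 2")
  case True
  then show ?thesis using lsnorm_pow_even[of 2 u] by simp
next
  case False
  then have s4: "s \<ge> 4" using s by presburger
  have s0: "s > 0" "s > 2" using s4 by auto
  have p: "real s / real (s - 2) > 1" "real s / 2 > 1" using s4 by (auto simp: of_nat_diff)
  have pq: "1 / (real s / real (s - 2)) + 1 / (real s / 2) = 1" using s4 by (simp add: of_nat_diff field_simps)
  have "(\<Sum>i\<in>UNIV. (x $ i) ^ (s - 2) * (u $ i)^2) = (\<Sum>i\<in>UNIV. \<bar>x $ i\<bar> ^ (s - 2) * \<bar>u $ i\<bar>^2)"
    using s by (intro sum.cong) (auto simp: power_even_abs)
  also have "\<dots> \<le>
      (\<Sum>i\<in>UNIV. (\<bar>x $ i\<bar> ^ (s - 2)) powr (real s / real (s - 2))) powr (1 / (real s / real (s - 2)))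
      * (\<Sum>i\<in>UNIV. (\<bar>u $ i\<bar>^2) powr (real s / 2)) powr (1 / (real s / 2))"
    by (rule holder_sum[OF _ p pq]) auto
  also have "(\<Sum>i\<in>UNIV. (\<bar>x $ i\<bar> ^ (s - 2)) powr (real s / real (s - 2))) = (\<Sum>i\<in>UNIV. \<bar>x $ i\<bar> ^ s)"
  proof (rule sum.cong)
    fix i :: 'a
    have "(\<bar>x $ i\<bar> ^ (s - 2)) powr (real s / real (s - 2)) = (\<bar>x $ i\<bar> powr real (s - 2)) powr (real s / real (s - 2))"
      using s0 powr_nat_abs[of "s - 1" "x $ i"] powr_nat_abs[of "s - 2" "x $ i"] by simp
    also have "\<dots> = \<bar>x $ i\<bar> powr real s" using s0 by (simp add: powr_powr)
    also have "\<dots> = \<bar>x $ i\<bar> ^ s" using s0 by (simp add: powr_nat_abs)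
    finally show "(\<bar>x $ i\<bar> ^ (s - 2)) powr (real s / real (s - 2)) = \<bar>x $ i\<bar> ^ s" .
  qed simp
  also have "(\<Sum>i\<in>UNIV. (\<bar>u $ i\<bar>^2) powr (real s / 2)) = (\<Sum>i\<in>UNIV. \<bar>u $ i\<bar> ^ s)"
  proof (rule sum.cong)
    fix i :: 'a
    have "(\<bar>u $ i\<bar>^2) powr (real s / 2) = (\<bar>u $ i\<bar> powr 2) powr (real s / 2)"
      using powr_nat_abs[of 2 "u $ i"] by (simp only: of_nat_numeral)
    also have "\<dots> = \<bar>u $ i\<bar> powr real s" by (subst powr_powr) simp
    also have "\<dots> = \<bar>u $ i\<bar> ^ s" using s0 by (simp add: powr_nat_abs)
    finally show "(\<bar>u $ i\<bar>^2) powr (real s / 2) = \<bar>u $ i\<bar> ^ s" .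
  qed simp
  also have "(\<Sum>i\<in>UNIV. \<bar>x $ i\<bar> ^ s) powr (1 / (real s / real (s - 2))) = lsnorm s x ^ (s - 2)"
  proof -
    have "lsnorm s x ^ (s - 2) = lsnorm s x powr real (s - 2)"
      using s0 powr_nat_nonneg[of "s - 2" "lsnorm s x"] lsnorm_nonneg[of s x] by simp
    also have "\<dots> = (\<Sum>i\<in>UNIV. \<bar>x $ i\<bar> ^ s) powr (1 / (real s / real (s - 2)))"
      unfolding lsnorm_def by (simp add: powr_powr)
    finally show ?thesis by simp
  qed
  also have "(\<Sum>i\<in>UNIV. \<bar>u $ i\<bar> ^ s) powr (1 / (real s / 2)) = lsnorm s u ^ 2"
  proof -
    have "lsnorm s u ^ 2 = lsnorm s u powr 2"
      by (simp add: powr_nat_nonneg lsnorm_nonneg)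
    also have "\<dots> = (\<Sum>i\<in>UNIV. \<bar>u $ i\<bar> ^ s) powr (1 / (real s / 2))"
      unfolding lsnorm_def by (simp add: powr_powr)
    finally show ?thesis by simp
  qed
  finally show ?thesis .
qed

lemma lsnorm_triangle:
  assumes s: "s \<ge> 2"
  shows "lsnorm s (u + v) \<le> lsnorm s u + lsnorm s v"
proof -
  have s0: "s > 0" using s by auto
  let ?w = "u + v"
  have "lsnorm s ?w ^ s = (\<Sum>i\<in>UNIV. \<bar>?w $ i\<bar> ^ s)" by (rule lsnorm_pow[OF s0])
  also have "\<dots> = (\<Sum>i\<in>UNIV. \<bar>?w $ i\<bar> ^ (s - 1) * \<bar>?w $ i\<bar>)"
    using s0 by (intro sum.cong refl) (metis power_minus_mult)
  also have "\<dots> \<le> (\<Sum>i\<in>UNIV. \<bar>?w $ i\<bar> ^ (s - 1) * \<bar>u $ i\<bar>) + (\<Sum>i\<in>UNIV. \<bar>?w $ i\<bar> ^ (s - 1) * \<bar>v $ i\<bar>)"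
    by (simp add: sum.distrib[symmetric] distrib_left[symmetric] mult_left_mono abs_triangle_ineq sum_mono)
  also have "\<dots> \<le> lsnorm s ?w ^ (s - 1) * lsnorm s u + lsnorm s ?w ^ (s - 1) * lsnorm s v"
    by (intro add_mono holder_ls1 s)
  moreover have "lsnorm s ?w ^ (s - 1) * lsnorm s ?w = lsnorm s ?w ^ s" using s0 by (rule power_minus_mult)
  ultimately have *: "lsnorm s ?w ^ (s - 1) * lsnorm s ?w \<le> lsnorm s ?w ^ (s - 1) * (lsnorm s u + lsnorm s v)"
    by (simp add: distrib_left)
  show ?thesis
  proof (cases "lsnorm s ?w = 0")
    case True then show ?thesis by (simp add: lsnorm_nonneg add_nonneg_nonneg)
  next
    case False
    then have "lsnorm s ?w ^ (s - 1) > 0" using lsnorm_nonneg[of s ?w] by simp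
    then show ?thesis using * by simp
  qed
qed

definition fdir :: "nat \<Rightarrow> real \<Rightarrow> real^'d \<Rightarrow> real^'d \<Rightarrow> real" where
  "fdir s q x u = q * lsnorm s x powr (q - real s) * (odot_pow x (s - 1) \<bullet> u)"

lemma odot_inner: "odot_pow x m \<bullet> u = (\<Sum>i\<in>UNIV. (x $ i) ^ m * u $ i)"
  by (simp add: odot_pow_def inner_vec_def)

lemma odot_inner_self:
  assumes "s > 0" "even s"
  shows "odot_pow x (s - 1) \<bullet> x = lsnorm s x ^ s"
  using assms by (simp add: odot_inner lsnorm_pow_even power_minus_mult)

lemma odot_inner_bound:
  assumes "s \<ge> 2" "even s"
  shows "\<bar>odot_pow x (s - 1) \<bullet> u\<bar> \<le> lsnorm s x ^ (s - 1) * lsnorm s u"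
  using holder_ls1'[OF assms] by (simp add: odot_inner)

lemma odot_inner_le:
  assumes "s \<ge> 2" "even s"
  shows "odot_pow x (s - 1) \<bullet> u \<le> lsnorm s x ^ (s - 1) * lsnorm s u"
  using odot_inner_bound[OF assms, of x u] by linarith

lemma powr_mult_pow:
  assumes "X > 0" "n > 0"
  shows "X powr a * X ^ n = X powr (a + real n)"
  using assms by (simp add: powr_add powr_realpow)

lemma fdir_bound:
  assumes s: "s \<ge> 2" "even s"
  shows "\<bar>fdir s q x u\<bar> \<le> \<bar>q\<bar> * lsnorm s x powr (q - 1) * lsnorm s u"
proof (cases "x = 0")
  case True then show ?thesis using s by (simp add: fdir_def)
next
  case False
  then have X: "lsnorm s x > 0" using lsnorm_eq_0_iff[of s x] lsnorm_nonneg[of s x] s by auto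
  have "\<bar>fdir s q x u\<bar> = \<bar>q\<bar> * lsnorm s x powr (q - real s) * \<bar>odot_pow x (s - 1) \<bullet> u\<bar>"
    by (simp add: fdir_def abs_mult)
  also have "\<dots> \<le> \<bar>q\<bar> * lsnorm s x powr (q - real s) * (lsnorm s x ^ (s - 1) * lsnorm s u)"
    by (intro mult_left_mono odot_inner_bound s) auto
  also have "\<dots> = \<bar>q\<bar> * (lsnorm s x powr (q - real s) * lsnorm s x ^ (s - 1)) * lsnorm s u"
    by simp
  also have "lsnorm s x powr (q - real s) * lsnorm s x ^ (s - 1) = lsnorm s x powr (q - 1)"
    using powr_mult_pow[OF X, of "s - 1" "q - real s"] s by (simp add: of_nat_diff)
  finally show ?thesis .
qed

lemma grad_ineq:
  assumes s: "s \<ge> 2" "even s" and q: "q \<ge> 1"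
  shows "lsnorm s x powr q + fdir s q x (y - x) \<le> lsnorm s y powr q"
proof (cases "x = 0")
  case True then show ?thesis using s by (simp add: fdir_def)
next
  case False
  define X where "X = lsnorm s x"
  define Y where "Y = lsnorm s y"
  have X: "X > 0" using False lsnorm_eq_0_iff[of s x] lsnorm_nonneg[of s x] s by (auto simp: X_def)
  have Y: "Y \<ge> 0" by (simp add: Y_def lsnorm_nonneg)
  have s0: "s > 0" using s by auto
  have "fdir s q x (y - x) = q * X powr (q - real s) * (odot_pow x (s - 1) \<bullet> y) - q * X powr (q - real s) * X ^ s"
    using odot_inner_self[OF s0 s(2), of x] by (simp add: fdir_def inner_diff_right X_def algebra_simps)
  also have "\<dots> \<le> q * X powr (q - real s) * (X ^ (s - 1) * Y) - q * X powr (q - real s) * X ^ s"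
  proof -
    have "odot_pow x (s - 1) \<bullet> y \<le> X ^ (s - 1) * Y" unfolding X_def Y_def by (rule odot_inner_le[OF s])
    then show ?thesis using q X by (intro diff_right_mono mult_left_mono) auto
  qed
  also have "\<dots> = q * (X powr (q - real s) * X ^ (s - 1)) * Y - q * (X powr (q - real s) * X ^ s)"
    by (simp add: algebra_simps)
  also have "X powr (q - real s) * X ^ (s - 1) = X powr (q - 1)"
    using powr_mult_pow[OF X, of "s - 1" "q - real s"] s by (simp add: of_nat_diff)
  also have "X powr (q - real s) * X ^ s = X powr q"
    using powr_mult_pow[OF X, of "s" "q - real s"] s by simp
  finally have *: "fdir s q x (y - x) \<le> q * X powr (q - 1) * Y - q * X powr q" .
  have "q * (X powr (q - 1) * Y) \<le> (q - 1) * X powr q + Y powr q"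
  proof (cases "q = 1")
    case True then show ?thesis using X by simp
  next
    case False
    then have q1: "q > 1" using q by simp
    have p: "q / (q - 1) > 1" using q1 by simp
    have pq: "1 / (q / (q - 1)) + 1 / q = 1" using q1 by (simp add: field_simps)
    have "X powr (q - 1) * Y \<le> (X powr (q - 1)) powr (q / (q - 1)) / (q / (q - 1)) + Y powr q / q"
      by (rule Youngs_inequality[OF p q1 pq]) (use Y in auto)
    also have "(X powr (q - 1)) powr (q / (q - 1)) = X powr q"
      using q1 by (simp add: powr_powr)
    finally have "X powr (q - 1) * Y \<le> X powr q * (q - 1) / q + Y powr q / q" by simp
    then have "q * (X powr (q - 1) * Y) \<le> q * (X powr q * (q - 1) / q + Y powr q / q)"
      using q1 by (intro mult_left_mono) auto
    moreover have "q * (X powr q * (q - 1) / q + Y powr q / q) = (q - 1) * X powr q + Y powr q"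
      using q1 by (simp add: field_simps)
    ultimately show ?thesis by linarith
  qed
  then show ?thesis using * by (simp add: X_def Y_def algebra_simps)
qed

lemma powr_succ_le:
  fixes a W r :: real
  assumes "0 \<le> a" "a \<le> W" "r \<ge> 0"
  shows "a powr (r + 1) \<le> a * W powr r"
proof (cases "a = 0")
  case True then show ?thesis using assms by (simp add: zero_le_mult_iff)
next
  case False
  then have "a > 0" using assms by simp
  then have "a powr (r + 1) = a * a powr r" by (simp add: powr_add)
  also have "\<dots> \<le> a * W powr r" using assms \<open>a > 0\<close> by (intro mult_left_mono powr_mono2) auto
  finally show ?thesis .
qed

lemma lsnorm_line_le:
  assumes s: "s \<ge> 2" and "\<tau> \<le> t'"
  shows "lsnorm s (b + \<tau> *\<^sub>R u) \<le> lsnorm s (b + t' *\<^sub>R u) + (t' - \<tau>) * lsnorm s u"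
proof -
  have "b + \<tau> *\<^sub>R u = (b + t' *\<^sub>R u) + (-(t' - \<tau>)) *\<^sub>R u" by (simp add: algebra_simps)
  then have "lsnorm s (b + \<tau> *\<^sub>R u) \<le> lsnorm s (b + t' *\<^sub>R u) + lsnorm s ((-(t' - \<tau>)) *\<^sub>R u)"
    using lsnorm_triangle[OF s] by metis
  also have "lsnorm s ((-(t' - \<tau>)) *\<^sub>R u) = (t' - \<tau>) * lsnorm s u"
    using s assms by (subst lsnorm_scale) auto
  finally show ?thesis .
qed

lemma fdir_lip_degenerate:
  assumes s: "s \<ge> 2" "even s" and q: "q \<ge> 2" and tt: "t \<le> \<tau>0" "\<tau>0 \<le> t'"
    and z: "b + \<tau>0 *\<^sub>R u = 0"
  shows "fdir s q (b + t' *\<^sub>R u) u - fdir s q (b + t *\<^sub>R u) u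
    \<le> q * (max q (real s) - 1) * (t' - t) * lsnorm s u ^ 2 * (lsnorm s (b + t' *\<^sub>R u) + (t' - t) * lsnorm s u) powr (q - 2)"
proof -
  have s0: "s > 0" using s by auto
  have bb: "b = - \<tau>0 *\<^sub>R u" using z by (simp add: eq_neg_iff_add_eq_0 add.commute)
  have xt: "b + \<tau> *\<^sub>R u = (\<tau> - \<tau>0) *\<^sub>R u" for \<tau> by (simp add: bb algebra_simps)
  define U where "U = lsnorm s u"
  have U: "U \<ge> 0" by (simp add: U_def lsnorm_nonneg)
  define A1 where "A1 = (t' - \<tau>0) * U"
  define A2 where "A2 = (\<tau>0 - t) * U"
  define W where "W = (t' - t) * U"
  define B where "B = lsnorm s (b + t' *\<^sub>R u) + (t' - t) * lsnorm s u"
  have A: "A1 \<ge> 0" "A2 \<ge> 0" "A1 \<le> W" "A2 \<le> W" "A1 + A2 = W"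
    using tt U by (auto simp: A1_def A2_def W_def algebra_simps intro: mult_left_mono)
  have WB: "W \<le> B" using U by (simp add: W_def B_def lsnorm_nonneg U_def)
  have n1: "lsnorm s (b + t' *\<^sub>R u) = A1" using tt s0 by (simp add: xt lsnorm_scale A1_def U_def)
  have n2: "lsnorm s (b + t *\<^sub>R u) = A2" using tt s0 by (simp add: xt lsnorm_scale A2_def U_def)
  have "fdir s q (b + t' *\<^sub>R u) u - fdir s q (b + t *\<^sub>R u) u
      \<le> \<bar>fdir s q (b + t' *\<^sub>R u) u\<bar> + \<bar>fdir s q (b + t *\<^sub>R u) u\<bar>" by linarith
  also have "\<dots> \<le> q * A1 powr (q - 1) * U + q * A2 powr (q - 1) * U"
    using fdir_bound[OF s, of q "b + t' *\<^sub>R u" u] fdir_bound[OF s, of q "b + t *\<^sub>R u" u] q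
    by (simp add: n1 n2 U_def)
  also have "\<dots> = q * U * (A1 powr ((q - 2) + 1) + A2 powr ((q - 2) + 1))" by (simp add: algebra_simps)
  also have "\<dots> \<le> q * U * (A1 * W powr (q - 2) + A2 * W powr (q - 2))"
    using A q U by (intro mult_left_mono add_mono powr_succ_le) auto
  also have "\<dots> = q * U * (A1 + A2) * W powr (q - 2)" by (simp add: algebra_simps)
  also have "\<dots> = q * U * W * W powr (q - 2)" using A(5) by (simp only:)
  also have "\<dots> \<le> q * U * W * B powr (q - 2)"
    using A q U WB by (intro mult_left_mono powr_mono2) auto
  also have "\<dots> = q * (t' - t) * U ^ 2 * B powr (q - 2)" by (simp add: W_def power2_eq_square)
  also have "\<dots> \<le> q * (max q (real s) - 1) * (t' - t) * U ^ 2 * B powr (q - 2)"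
  proof -
    have h1: "0 \<le> (t' - t) * U ^ 2 * B powr (q - 2)" using tt by auto
    have h2: "q \<le> q * (max q (real s) - 1)" using q by (simp add: max_def)
    from mult_right_mono[OF h2 h1] show ?thesis by (simp only: mult.assoc)
  qed
  finally show ?thesis by (simp add: U_def B_def)
qed

lemma vec_line_nth[simp]: "(b + t *\<^sub>R u) $ i = b $ i + t * u $ i"
  by simp

lemma fdir_lip_G'_bound:
  fixes X U Q R q :: real
  assumes s: "s \<ge> 2" and q: "q \<ge> 2" and X: "X > 0" and U: "U \<ge> 0"
    and Q: "\<bar>Q\<bar> \<le> X ^ (s - 1) * U" and R: "R \<le> X ^ (s - 2) * U ^ 2"
  shows "q * ((q - real s) * X powr (q - 2 * real s) * Q ^ 2 + (real s - 1) * X powr (q - real s) * R)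
     \<le> q * (max q (real s) - 1) * X powr (q - 2) * U ^ 2"
proof -
  have e1: "X powr (q - 2 * real s) * (X ^ (s - 1) * U) ^ 2 = X powr (q - 2) * U ^ 2"
  proof -
    have "(X ^ (s - 1) * U) ^ 2 = X ^ (2 * (s - 1)) * U ^ 2" by (simp add: power_mult_distrib power_mult[symmetric] mult.commute)
    moreover have "X powr (q - 2 * real s) * X ^ (2 * (s - 1)) = X powr (q - 2)"
      using powr_mult_pow[OF X, of "2 * (s - 1)" "q - 2 * real s"] s by (simp add: of_nat_diff)
    ultimately show ?thesis by (simp add: mult.assoc[symmetric])
  qed
  have e2: "X powr (q - real s) * (X ^ (s - 2) * U ^ 2) = X powr (q - 2) * U ^ 2"
  proof (cases "s = 2")
    case True then show ?thesis by simp
  next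
    case False
    then have "X powr (q - real s) * X ^ (s - 2) = X powr (q - 2)"
      using powr_mult_pow[OF X, of "s - 2" "q - real s"] s by (simp add: of_nat_diff)
    then show ?thesis by (simp add: mult.assoc[symmetric])
  qed
  have Q2: "Q ^ 2 \<le> (X ^ (s - 1) * U) ^ 2"
    using Q by (metis abs_ge_zero power2_abs power_mono)
  have t2: "(real s - 1) * X powr (q - real s) * R \<le> (real s - 1) * X powr (q - 2) * U ^ 2"
  proof -
    have "(real s - 1) * X powr (q - real s) * R \<le> (real s - 1) * X powr (q - real s) * (X ^ (s - 2) * U ^ 2)"
      using s R by (intro mult_left_mono) auto
    also have "\<dots> = (real s - 1) * X powr (q - 2) * U ^ 2" using e2 by (simp add: mult.assoc)
    finally show ?thesis .
  qed
  have t1: "(q - real s) * X powr (q - 2 * real s) * Q ^ 2 \<le> (max q (real s) - real s) * X powr (q - 2) * U ^ 2"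
  proof (cases "q \<ge> real s")
    case True
    have "(q - real s) * X powr (q - 2 * real s) * Q ^ 2 \<le> (q - real s) * X powr (q - 2 * real s) * (X ^ (s - 1) * U) ^ 2"
      using True Q2 by (intro mult_left_mono) auto
    also have "\<dots> = (q - real s) * X powr (q - 2) * U ^ 2" using e1 by (simp add: mult.assoc)
    finally show ?thesis using True by (simp add: max_def)
  next
    case False
    then have "(q - real s) * X powr (q - 2 * real s) * Q ^ 2 \<le> 0"
      by (intro mult_nonpos_nonneg) (auto intro: mult_nonpos_nonneg)
    moreover have "0 \<le> (max q (real s) - real s) * X powr (q - 2) * U ^ 2" by auto
    ultimately show ?thesis by linarith
  qed
  have "(q - real s) * X powr (q - 2 * real s) * Q ^ 2 + (real s - 1) * X powr (q - real s) * R
      \<le> (max q (real s) - real s) * X powr (q - 2) * U ^ 2 + (real s - 1) * X powr (q - 2) * U ^ 2"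
    using t1 t2 by linarith
  also have "\<dots> = (max q (real s) - 1) * X powr (q - 2) * U ^ 2" by (simp add: algebra_simps)
  finally show ?thesis using q by (simp add: mult.assoc mult_left_mono)
qed

lemma fdir_lip_nondeg:
  assumes s: "s \<ge> 2" "even s" and q: "q \<ge> 2" and tt: "t < t'"
    and nz: "\<And>\<tau>. t \<le> \<tau> \<Longrightarrow> \<tau> \<le> t' \<Longrightarrow> b + \<tau> *\<^sub>R u \<noteq> 0"
  shows "fdir s q (b + t' *\<^sub>R u) u - fdir s q (b + t *\<^sub>R u) u
    \<le> q * (max q (real s) - 1) * (t' - t) * lsnorm s u ^ 2 * (lsnorm s (b + t' *\<^sub>R u) + (t' - t) * lsnorm s u) powr (q - 2)"
proof -
  have s0: "s > 0" using s by auto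
  define P where "P = (\<lambda>\<tau>. \<Sum>i\<in>UNIV. (b $ i + \<tau> * u $ i) ^ s)"
  define Q where "Q = (\<lambda>\<tau>. \<Sum>i\<in>UNIV. (b $ i + \<tau> * u $ i) ^ (s - 1) * u $ i)"
  define R where "R = (\<lambda>\<tau>. \<Sum>i\<in>UNIV. (b $ i + \<tau> * u $ i) ^ (s - 2) * (u $ i) ^ 2)"
  define G where "G = (\<lambda>\<tau>. q * P \<tau> powr ((q - real s) / real s) * Q \<tau>)"
  define G' where "G' = (\<lambda>\<tau>. q * ((q - real s) / real s * P \<tau> powr ((q - real s) / real s - 1) * (real s * Q \<tau>) * Q \<tau>
      + (real s - 1) * R \<tau> * P \<tau> powr ((q - real s) / real s)))"
  define U where "U = lsnorm s u"
  have Pn: "P \<tau> = lsnorm s (b + \<tau> *\<^sub>R u) ^ s" for \<tau>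
    using lsnorm_pow_even[OF s0 s(2), of "b + \<tau> *\<^sub>R u"] by (simp add: P_def)
  have Pnn: "P \<tau> \<ge> 0" for \<tau> by (simp add: Pn lsnorm_nonneg)
  have Gf: "fdir s q (b + \<tau> *\<^sub>R u) u = G \<tau>" for \<tau>
  proof -
    have "lsnorm s (b + \<tau> *\<^sub>R u) = P \<tau> powr (1 / real s)"
      using s0 s(2) by (simp add: lsnorm_def P_def power_even_abs)
    then show ?thesis by (simp add: fdir_def G_def odot_inner Q_def powr_powr)
  qed
  have dP: "DERIV P \<tau> :> real s * Q \<tau>" for \<tau>
  proof -
    have "DERIV P \<tau> :> (\<Sum>i\<in>UNIV. real s * (b $ i + \<tau> * u $ i) ^ (s - 1) * u $ i)"
      unfolding P_def by (intro DERIV_sum) (auto intro!: derivative_eq_intros)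
    then show ?thesis by (simp add: Q_def sum_distrib_left mult.assoc)
  qed
  have dQ: "DERIV Q \<tau> :> (real s - 1) * R \<tau>" for \<tau>
  proof -
    have "DERIV Q \<tau> :> (\<Sum>i\<in>UNIV. (real s - 1) * ((b $ i + \<tau> * u $ i) ^ (s - 2) * (u $ i) ^ 2))"
      unfolding Q_def
    proof (intro DERIV_sum)
      fix i :: 'a
      show "DERIV (\<lambda>x. (b $ i + x * u $ i) ^ (s - 1) * u $ i) \<tau> :> (real s - 1) * ((b $ i + \<tau> * u $ i) ^ (s - 2) * (u $ i) ^ 2)"
      proof -
        have "DERIV (\<lambda>x. (b $ i + x * u $ i) ^ (s - 1)) \<tau> :> real (s - 1) * (b $ i + \<tau> * u $ i) ^ (s - 1 - 1) * u $ i"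
          by (auto intro!: derivative_eq_intros)
        from DERIV_cmult_right[OF this, of "u $ i"]
        have "DERIV (\<lambda>x. (b $ i + x * u $ i) ^ (s - 1) * u $ i) \<tau> :> real (s - 1) * (b $ i + \<tau> * u $ i) ^ (s - 1 - 1) * u $ i * u $ i" .
        moreover have "real (s - 1) * (b $ i + \<tau> * u $ i) ^ (s - 1 - 1) * u $ i * u $ i = (real s - 1) * ((b $ i + \<tau> * u $ i) ^ (s - 2) * (u $ i) ^ 2)"
          using s by (simp add: of_nat_diff power2_eq_square numeral_2_eq_2)
        ultimately show ?thesis by simp
      qed
    qed
    then show ?thesis by (simp add: R_def sum_distrib_left)
  qed
  have Ppos: "P \<tau> > 0" if "t \<le> \<tau>" "\<tau> \<le> t'" for \<tau>
  proof -
    have "lsnorm s (b + \<tau> *\<^sub>R u) \<noteq> 0" using nz[OF that] lsnorm_eq_0_iff[OF s0] by auto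
    then show ?thesis using Pn[of \<tau>] lsnorm_nonneg[of s "b + \<tau> *\<^sub>R u"] by simp
  qed
  have dG: "DERIV G \<tau> :> G' \<tau>" if "t \<le> \<tau>" "\<tau> \<le> t'" for \<tau>
  proof -
    have "DERIV (\<lambda>\<tau>. P \<tau> powr ((q - real s) / real s)) \<tau> :> (q - real s) / real s * P \<tau> powr ((q - real s) / real s - of_nat 1) * (real s * Q \<tau>)"
      by (rule DERIV_fun_powr[OF dP Ppos[OF that]])
    from DERIV_cmult[OF DERIV_mult[OF this dQ], of q]
    have "DERIV (\<lambda>\<tau>. q * (P \<tau> powr ((q - real s) / real s) * Q \<tau>)) \<tau> :>
       q * ((q - real s) / real s * P \<tau> powr ((q - real s) / real s - of_nat 1) * (real s * Q \<tau>) * Q \<tau> +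
         (real s - 1) * R \<tau> * P \<tau> powr ((q - real s) / real s))" .
    moreover have "G = (\<lambda>\<tau>. q * (P \<tau> powr ((q - real s) / real s) * Q \<tau>))"
      by (simp add: G_def fun_eq_iff mult.assoc)
    ultimately show ?thesis by (simp add: G'_def)
  qed
  obtain z where z: "t < z" "z < t'" "G t' - G t = (t' - t) * G' z"
    using MVT2[OF tt dG] by blast
  define X where "X = lsnorm s (b + z *\<^sub>R u)"
  have X: "X > 0" using nz[of z] z lsnorm_eq_0_iff[OF s0, of "b + z *\<^sub>R u"] lsnorm_nonneg[of s "b + z *\<^sub>R u"]
    unfolding X_def by auto
  have PX: "P z = X powr real s" using Pn[of z] X by (simp add: X_def powr_realpow)
  have G'z: "G' z = q * ((q - real s) * X powr (q - 2 * real s) * Q z ^ 2 + (real s - 1) * X powr (q - real s) * R z)"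
  proof -
    have e: "real s * ((q - real s) / real s - 1) = q - 2 * real s" using s0 by (simp add: field_simps)
    have a: "P z powr ((q - real s) / real s - 1) = X powr (q - 2 * real s)"
      using s0 by (simp add: PX powr_powr e)
    have e2: "real s * ((q - real s) / real s) = q - real s" using s0 by simp
    have b: "P z powr ((q - real s) / real s) = X powr (q - real s)"
      using s0 by (simp add: PX powr_powr e2)
    have c: "(q - real s) / real s * (real s * Q z) = (q - real s) * Q z" using s0 by simp
    show ?thesis unfolding G'_def a b using c s0 by (simp add: power2_eq_square mult_ac)
  qed
  have Qb: "\<bar>Q z\<bar> \<le> X ^ (s - 1) * U"
    using holder_ls1'[OF s, of "b + z *\<^sub>R u" u] by (simp add: Q_def X_def U_def)
  have Rb: "R z \<le> X ^ (s - 2) * U ^ 2"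
    using holder_ls2[OF s, of "b + z *\<^sub>R u" u] by (simp add: R_def X_def U_def)
  have "G' z \<le> q * (max q (real s) - 1) * X powr (q - 2) * U ^ 2"
    unfolding G'z by (rule fdir_lip_G'_bound[OF s(1) q X _ Qb Rb]) (simp add: U_def lsnorm_nonneg)
  also have "\<dots> \<le> q * (max q (real s) - 1) * (lsnorm s (b + t' *\<^sub>R u) + (t' - t) * U) powr (q - 2) * U ^ 2"
  proof -
    have "X \<le> lsnorm s (b + t' *\<^sub>R u) + (t' - z) * U"
      unfolding X_def U_def by (rule lsnorm_line_le[OF s(1)]) (use z in auto)
    also have "\<dots> \<le> lsnorm s (b + t' *\<^sub>R u) + (t' - t) * U"
      using z by (auto simp: U_def lsnorm_nonneg intro!: mult_right_mono)
    finally have "X powr (q - 2) \<le> (lsnorm s (b + t' *\<^sub>R u) + (t' - t) * U) powr (q - 2)"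
      using X q by (intro powr_mono2) auto
    moreover have "0 \<le> q * (max q (real s) - 1)" using q by (auto simp: max_def)
    ultimately show ?thesis by (intro mult_right_mono mult_left_mono) auto
  qed
  finally have "G' z \<le> q * (max q (real s) - 1) * (lsnorm s (b + t' *\<^sub>R u) + (t' - t) * U) powr (q - 2) * U ^ 2" .
  then have "(t' - t) * G' z \<le> (t' - t) * (q * (max q (real s) - 1) * (lsnorm s (b + t' *\<^sub>R u) + (t' - t) * U) powr (q - 2) * U ^ 2)"
    using tt by (intro mult_left_mono) auto
  moreover have "fdir s q (b + t' *\<^sub>R u) u - fdir s q (b + t *\<^sub>R u) u = (t' - t) * G' z"
    using z(3) by (simp add: Gf)
  ultimately show ?thesis by (simp add: U_def mult_ac)
qed

lemma fdir_lip:
  assumes s: "s \<ge> 2" "even s" and q: "q \<ge> 2" and tt: "t \<le> t'"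
  shows "fdir s q (b + t' *\<^sub>R u) u - fdir s q (b + t *\<^sub>R u) u
    \<le> q * (max q (real s) - 1) * (t' - t) * lsnorm s u ^ 2 * (lsnorm s (b + t' *\<^sub>R u) + (t' - t) * lsnorm s u) powr (q - 2)"
proof (cases "\<exists>\<tau>0. t \<le> \<tau>0 \<and> \<tau>0 \<le> t' \<and> b + \<tau>0 *\<^sub>R u = 0")
  case True
  then obtain \<tau>0 where "t \<le> \<tau>0" "\<tau>0 \<le> t'" "b + \<tau>0 *\<^sub>R u = 0" by blast
  then show ?thesis by (rule fdir_lip_degenerate[OF s q])
next
  case False
  show ?thesis
  proof (cases "t = t'")
    case True then show ?thesis by simp
  next
    case False
    then have "t < t'" using tt by simp
    then show ?thesis using \<open>\<not> (\<exists>\<tau>0. _)\<close> by (intro fdir_lip_nondeg[OF s q]) auto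
  qed
qed

lemma young_simple:
  fixes x y p p' :: real
  assumes "p > 1" "p' > 1" "1/p + 1/p' = 1" "x \<ge> 0" "y \<ge> 0"
  shows "x * y \<le> x powr p + y powr p'"
proof -
  have "x * y \<le> x powr p / p + y powr p' / p'" by (rule Youngs_inequality[OF assms])
  also have "\<dots> \<le> x powr p + y powr p'"
    using assms mult_left_mono[of 1 p "x powr p"] mult_left_mono[of 1 p' "y powr p'"]
    by (intro add_mono) (auto simp: divide_le_eq)
  finally show ?thesis .
qed

lemma holder_integral:
  fixes f g :: "'a \<Rightarrow> real"
  assumes p: "p > 1" and p': "p' > 1" and pq: "1/p + 1/p' = 1"
    and f[measurable]: "f \<in> borel_measurable M" and g[measurable]: "g \<in> borel_measurable M"
    and f0: "\<And>x. f x \<ge> 0" and g0: "\<And>x. g x \<ge> 0"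
    and fi: "integrable M (\<lambda>x. f x powr p)" and gi: "integrable M (\<lambda>x. g x powr p')"
  shows "integrable M (\<lambda>x. f x * g x)"
    and "(\<integral>x. f x * g x \<partial>M) \<le> (\<integral>x. f x powr p \<partial>M) powr (1/p) * (\<integral>x. g x powr p' \<partial>M) powr (1/p')"
proof -
  show fgi: "integrable M (\<lambda>x. f x * g x)"
  proof (rule Bochner_Integration.integrable_bound[OF Bochner_Integration.integrable_add[OF fi gi]])
    show "AE x in M. norm (f x * g x) \<le> norm (f x powr p + g x powr p')"
      using young_simple[OF p p' pq f0 g0] f0 g0 by (auto simp: abs_mult)
  qed measurable
  define A where "A = (\<integral>x. f x powr p \<partial>M)"
  define B where "B = (\<integral>x. g x powr p' \<partial>M)"
  have A0: "A \<ge> 0" "B \<ge> 0" unfolding A_def B_def by (auto intro!: integral_nonneg_AE)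
  show "(\<integral>x. f x * g x \<partial>M) \<le> A powr (1/p) * B powr (1/p')"
  proof (cases "A = 0 \<or> B = 0")
    case True
    have "(\<integral>x. f x * g x \<partial>M) = 0"
    proof (rule integral_eq_zero_AE)
      from True show "AE x in M. f x * g x = 0"
      proof
        assume "A = 0"
        then have "AE x in M. f x powr p = 0" unfolding A_def using fi by (subst (asm) integral_nonneg_eq_0_iff_AE) auto
        then show ?thesis by eventually_elim simp
      next
        assume "B = 0"
        then have "AE x in M. g x powr p' = 0" unfolding B_def using gi by (subst (asm) integral_nonneg_eq_0_iff_AE) auto
        then show ?thesis by eventually_elim simp
      qed
    qed
    then show ?thesis using A0 by simp
  next
    case False
    then have Ap: "A > 0" "B > 0" using A0 by auto
    define a where "a = A powr (1/p)"
    define b where "b = B powr (1/p')"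
    have ab: "a > 0" "b > 0" using Ap by (auto simp: a_def b_def)
    have ap: "a powr p = A" using Ap p by (simp add: a_def powr_powr)
    have bp: "b powr p' = B" using Ap p' by (simp add: b_def powr_powr)
    have "(\<integral>x. f x * g x / (a * b) \<partial>M) \<le> (\<integral>x. f x powr p / A / p + g x powr p' / B / p' \<partial>M)"
    proof (rule integral_mono)
      show "integrable M (\<lambda>x. f x * g x / (a * b))" using fgi by simp
      show "integrable M (\<lambda>x. f x powr p / A / p + g x powr p' / B / p')" using fi gi by simp
      fix x
      have "(f x / a) * (g x / b) \<le> (f x / a) powr p / p + (g x / b) powr p' / p'"
        using f0 g0 ab by (intro Youngs_inequality[OF p p' pq]) auto
      also have "\<dots> = f x powr p / A / p + g x powr p' / B / p'"
        using f0[of x] g0[of x] ab ap bp by (simp add: powr_divide)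
      finally show "f x * g x / (a * b) \<le> f x powr p / A / p + g x powr p' / B / p'" by simp
    qed
    also have "\<dots> = A / A / p + B / B / p'"
      using fi gi by (simp add: A_def B_def)
    also have "\<dots> = 1" using Ap pq by simp
    finally have "(\<integral>x. f x * g x \<partial>M) / (a * b) \<le> 1" by simp
    then show ?thesis using ab by (simp add: a_def[symmetric] b_def[symmetric] divide_le_eq)
  qed
qed

lemma powr_sum_bound:
  fixes x y p :: real
  assumes "x \<ge> 0" "y \<ge> 0" "p \<ge> 0"
  shows "(x + y) powr p \<le> 2 powr p * (x powr p + y powr p)"
proof -
  have "(x + y) powr p \<le> (2 * max x y) powr p" using assms by (intro powr_mono2) auto
  also have "\<dots> = 2 powr p * max x y powr p" using assms by (simp add: powr_mult)
  also have "max x y powr p \<le> x powr p + y powr p" by (auto simp: max_def)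
  finally show ?thesis by simp
qed

lemma integrable_powr_sum:
  fixes f g :: "'a \<Rightarrow> real"
  assumes [measurable]: "f \<in> borel_measurable M" "g \<in> borel_measurable M"
    and f0: "\<And>x. f x \<ge> 0" and g0: "\<And>x. g x \<ge> 0" and p: "p \<ge> 0"
    and fi: "integrable M (\<lambda>x. f x powr p)" and gi: "integrable M (\<lambda>x. g x powr p)"
  shows "integrable M (\<lambda>x. (f x + g x) powr p)"
proof (rule Bochner_Integration.integrable_bound[OF integrable_mult_right[OF Bochner_Integration.integrable_add[OF fi gi], of "2 powr p"]])
  show "AE x in M. norm ((f x + g x) powr p) \<le> norm (2 powr p * (f x powr p + g x powr p))"
    using powr_sum_bound[OF f0 g0 p] by auto
qed measurable

lemma minkowski_integral:
  fixes f g :: "'a \<Rightarrow> real"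
  assumes p: "p \<ge> 1"
    and f[measurable]: "f \<in> borel_measurable M" and g[measurable]: "g \<in> borel_measurable M"
    and f0: "\<And>x. f x \<ge> 0" and g0: "\<And>x. g x \<ge> 0"
    and fi: "integrable M (\<lambda>x. f x powr p)" and gi: "integrable M (\<lambda>x. g x powr p)"
  shows "(\<integral>x. (f x + g x) powr p \<partial>M) powr (1/p) \<le> (\<integral>x. f x powr p \<partial>M) powr (1/p) + (\<integral>x. g x powr p \<partial>M) powr (1/p)"
proof (cases "p = 1")
  case True
  have e: "(f x + g x) powr p = f x powr p + g x powr p" for x
    using True f0[of x] g0[of x] by simp
  have "(\<integral>x. (f x + g x) powr p \<partial>M) = (\<integral>x. f x powr p \<partial>M) + (\<integral>x. g x powr p \<partial>M)"
    unfolding e by (rule Bochner_Integration.integral_add[OF fi gi])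
  then show ?thesis using True f0 g0 fi gi by (simp add: integral_nonneg_AE)
next
  case False
  then have p1: "p > 1" using p by simp
  define p' where "p' = p / (p - 1)"
  have p': "p' > 1" using p1 by (simp add: p'_def)
  have pq: "1/p + 1/p' = 1" using p1 by (simp add: p'_def field_simps)
  define h where "h = (\<lambda>x. (f x + g x) powr (p - 1))"
  have h0: "h x \<ge> 0" for x by (simp add: h_def)
  have hp: "h x powr p' = (f x + g x) powr p" for x
    using p1 by (simp add: h_def powr_powr p'_def)
  have fgi: "integrable M (\<lambda>x. (f x + g x) powr p)"
    by (rule integrable_powr_sum[OF f g f0 g0 _ fi gi]) (use p in auto)
  have hi: "integrable M (\<lambda>x. h x powr p')" using fgi by (simp add: hp)
  have hm[measurable]: "h \<in> borel_measurable M" unfolding h_def by measurable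
  have split: "(f x + g x) powr p = f x * h x + g x * h x" for x
  proof (cases "f x + g x = 0")
    case True then have "f x = 0" "g x = 0" using f0[of x] g0[of x] by linarith+
    then show ?thesis by simp
  next
    case False
    then have "f x + g x > 0" using f0[of x] g0[of x] by simp
    then have "(f x + g x) powr p = (f x + g x) * (f x + g x) powr (p - 1)"
    proof -
      assume pos: "f x + g x > 0"
      have "(f x + g x) powr p = (f x + g x) powr (1 + (p - 1))" by simp
      also have "\<dots> = (f x + g x) powr 1 * (f x + g x) powr (p - 1)" by (rule powr_add)
      finally show ?thesis using pos by simp
    qed
    then show ?thesis by (simp add: h_def distrib_right)
  qed
  define S where "S = (\<integral>x. (f x + g x) powr p \<partial>M)"
  have S0: "S \<ge> 0" unfolding S_def by (auto intro!: integral_nonneg_AE)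
  have "S = (\<integral>x. f x * h x \<partial>M) + (\<integral>x. g x * h x \<partial>M)"
    unfolding S_def split
    by (rule Bochner_Integration.integral_add; rule holder_integral(1)[OF p1 p' pq]) (use f0 g0 h0 fi gi hi in auto)
  also have "\<dots> \<le> (\<integral>x. f x powr p \<partial>M) powr (1/p) * (\<integral>x. h x powr p' \<partial>M) powr (1/p')
       + (\<integral>x. g x powr p \<partial>M) powr (1/p) * (\<integral>x. h x powr p' \<partial>M) powr (1/p')"
    by (intro add_mono holder_integral(2)[OF p1 p' pq]) (use f0 g0 h0 fi gi hi in auto)
  also have "(\<integral>x. h x powr p' \<partial>M) = S" by (simp add: hp S_def)
  finally have *: "S \<le> ((\<integral>x. f x powr p \<partial>M) powr (1/p) + (\<integral>x. g x powr p \<partial>M) powr (1/p)) * S powr (1/p')"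
    by (simp add: distrib_right)
  show ?thesis
  proof (cases "S = 0")
    case True then show ?thesis by (simp add: S_def[symmetric])
  next
    case False
    then have Sp: "S > 0" using S0 by simp
    have "S = S powr (1/p) * S powr (1/p')" using Sp pq by (simp add: powr_add[symmetric])
    with * have "S powr (1/p) * S powr (1/p') \<le> ((\<integral>x. f x powr p \<partial>M) powr (1/p) + (\<integral>x. g x powr p \<partial>M) powr (1/p)) * S powr (1/p')"
      by simp
    then have "S powr (1/p) \<le> (\<integral>x. f x powr p \<partial>M) powr (1/p) + (\<integral>x. g x powr p \<partial>M) powr (1/p)"
      using Sp by (simp add: mult_le_cancel_right)
    then show ?thesis by (simp add: S_def)
  qed
qed

lemma concave_tangent:
  fixes x y r :: real
  assumes x: "x > 0" and y: "y \<ge> 0" and r: "0 < r" "r \<le> 1"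
  shows "y powr r \<le> x powr r + r * x powr (r - 1) * (y - x)"
proof (cases "y = 0 \<or> r = 1")
  case True
  then show ?thesis
  proof
    assume "y = 0"
    have "r * x powr (r - 1) * x = r * x powr r" using x by (simp add: powr_diff)
    then show ?thesis using \<open>y = 0\<close> r x by (simp add: algebra_simps)
  next
    assume "r = 1" then show ?thesis using x y by simp
  qed
next
  case False
  then have yp: "y > 0" and r1: "r < 1" using y r by auto
  have "(y / x) powr r * 1 powr (1 - r) \<le> r * (y / x) + (1 - r) * 1"
    by (rule Youngs_inequality_0) (use r r1 x yp in auto)
  then have "(y / x) powr r \<le> r * (y / x) + (1 - r)" by simp
  then have "x powr r * (y / x) powr r \<le> x powr r * (r * (y / x) + (1 - r))"
    by (intro mult_left_mono) auto
  moreover have "x powr r * (y / x) powr r = y powr r" using x yp by (simp add: powr_divide)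
  moreover have "x powr r * (r * (y / x) + (1 - r)) = x powr r + r * x powr (r - 1) * (y - x)"
  proof -
    have "x powr r * (y / x) = x powr (r - 1) * y" using x by (simp add: powr_diff)
    moreover have "x powr r = x powr (r - 1) * x" using x by (simp add: powr_diff)
    ultimately show ?thesis by (simp add: algebra_simps)
  qed
  ultimately show ?thesis by simp
qed

lemma partition_step_factor:
  fixes y c0 a q :: real
  assumes q: "q \<ge> 2" and c0: "c0 > 0" and y: "y \<ge> c0" and a: "a \<ge> 0"
  shows "y powr (2 - q) * (y + a) powr (q - 2) \<le> (1 + a / c0) powr (q - 2)"
proof -
  have yp: "y > 0" using c0 y by simp
  have "y powr (2 - q) * (y + a) powr (q - 2) = (y + a) powr (q - 2) / y powr (q - 2)"
  proof -
    have "y powr (2 - q) = inverse (y powr (q - 2))" using powr_minus[of y "q - 2"] by simp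
    then show ?thesis by (simp add: divide_inverse mult.commute)
  qed
  also have "\<dots> = ((y + a) / y) powr (q - 2)" using yp a by (simp add: powr_divide)
  also have "(y + a) / y = 1 + a / y" using yp by (simp add: field_simps)
  also have "(1 + a / y) powr (q - 2) \<le> (1 + a / c0) powr (q - 2)"
    using q a c0 y yp by (intro powr_mono2) (auto intro!: divide_left_mono)
  finally show ?thesis .
qed

lemma partition_bound:
  fixes \<Phi> D :: "real \<Rightarrow> real" and q c \<sigma> :: real
  assumes q: "q \<ge> 2" and c: "c \<ge> 0" and \<sigma>: "\<sigma> \<ge> 0" and \<Phi>0: "\<Phi> 0 > 0" and D0: "D 0 = 0"
    and I4: "\<And>t t'. 0 \<le> t \<Longrightarrow> t \<le> 1 \<Longrightarrow> 0 \<le> t' \<Longrightarrow> t' \<le> 1 \<Longrightarrow> \<Phi> t + (t' - t) * D t \<le> \<Phi> t'"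
    and I5: "\<And>t t'. 0 \<le> t \<Longrightarrow> t \<le> t' \<Longrightarrow> t' \<le> 1 \<Longrightarrow>
               D t' - D t \<le> q * c * (t' - t) * \<sigma>\<^sup>2 * (\<Phi> t' powr (1/q) + (t' - t) * \<sigma>) powr (q - 2)"
    and I6: "\<And>t t'. 0 \<le> t \<Longrightarrow> t \<le> t' \<Longrightarrow> t' \<le> 1 \<Longrightarrow> \<Phi> t' powr (1/q) \<le> \<Phi> t powr (1/q) + (t' - t) * \<sigma>"
  shows "\<Phi> 1 powr (2/q) \<le> \<Phi> 0 powr (2/q) + c * \<sigma>\<^sup>2"
proof -
  have q0: "q > 0" using q by simp
  have \<Phi>ge: "\<Phi> 0 \<le> \<Phi> t" if "0 \<le> t" "t \<le> 1" for t
    using I4[of 0 t] that D0 by simp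
  have Dnn: "D t \<ge> 0" if "0 \<le> t" "t \<le> 1" for t
  proof (cases "t = 0")
    case True then show ?thesis using D0 by simp
  next
    case False
    then have tp: "t > 0" using that by simp
    have "\<Phi> t + (0 - t) * D t \<le> \<Phi> 0" using I4[of t 0] that by simp
    then have "t * D t \<ge> 0" using \<Phi>ge[OF that] by simp
    then show ?thesis using tp by (simp add: zero_le_mult_iff)
  qed
  have mono: "\<Phi> t \<le> \<Phi> t'" if "0 \<le> t" "t \<le> t'" "t' \<le> 1" for t t'
  proof -
    have "\<Phi> t + (t' - t) * D t \<le> \<Phi> t'" using I4[of t t'] that by simp
    moreover have "(t' - t) * D t \<ge> 0" using Dnn[of t] that by simp
    ultimately show ?thesis by simp
  qed
  define c0 where "c0 = \<Phi> 0 powr (1/q)"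
  have c0: "c0 > 0" using \<Phi>0 by (simp add: c0_def)
  define K where "K = q * c * \<sigma>\<^sup>2"
  have K: "K \<ge> 0" using q c by (simp add: K_def)
  have main: "\<Phi> 1 powr (2/q) \<le> \<Phi> 0 powr (2/q) + c * \<sigma>\<^sup>2 * ((1 + 2 * (\<sigma> / real N) / c0) powr (q - 2) * ((real N + 1) / real N))"
    if N: "N \<ge> 1" for N :: nat
  proof -
    define \<delta> where "\<delta> = 1 / real N"
    have \<delta>: "\<delta> > 0" using N by (simp add: \<delta>_def)
    define t where "t = (\<lambda>k::nat. real k / real N)"
    have t01: "0 \<le> t k" "t k \<le> 1" if "k \<le> N" for k using that N by (auto simp: t_def)
    have tS: "t (Suc k) = t k + \<delta>" for k using N by (simp add: t_def \<delta>_def add_divide_distrib)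
    have tpos: "\<Phi> (t k) > 0" if "k \<le> N" for k using \<Phi>ge[OF t01[OF that]] \<Phi>0 by simp
    define E where "E = (1 + 2 * (\<delta> * \<sigma>) / c0) powr (q - 2)"
    have Dk: "D (t k) \<le> K * t k * (\<Phi> (t k) powr (1/q) + \<delta> * \<sigma>) powr (q - 2)" if "k \<le> N" for k
      using that
    proof (induction k)
      case 0 then show ?case using D0 by (simp add: t_def)
    next
      case (Suc k)
      then have k: "k \<le> N" "Suc k \<le> N" by auto
      have "D (t (Suc k)) - D (t k) \<le> q * c * (t (Suc k) - t k) * \<sigma>\<^sup>2 * (\<Phi> (t (Suc k)) powr (1/q) + (t (Suc k) - t k) * \<sigma>) powr (q - 2)"
        using t01[OF k(1)] t01[OF k(2)] tS \<delta> by (intro I5) auto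
      then have a: "D (t (Suc k)) \<le> D (t k) + K * \<delta> * (\<Phi> (t (Suc k)) powr (1/q) + \<delta> * \<sigma>) powr (q - 2)"
        using tS by (simp add: K_def mult_ac)
      have "\<Phi> (t k) \<le> \<Phi> (t (Suc k))" using t01[OF k(1)] t01[OF k(2)] tS \<delta> by (intro mono) auto
      then have "\<Phi> (t k) powr (1/q) \<le> \<Phi> (t (Suc k)) powr (1/q)"
        using tpos[OF k(1)] q by (intro powr_mono2) auto
      then have "(\<Phi> (t k) powr (1/q) + \<delta> * \<sigma>) powr (q - 2) \<le> (\<Phi> (t (Suc k)) powr (1/q) + \<delta> * \<sigma>) powr (q - 2)"
        using q \<delta> \<sigma> by (intro powr_mono2) auto
      then have "K * t k * (\<Phi> (t k) powr (1/q) + \<delta> * \<sigma>) powr (q - 2) \<le> K * t k * (\<Phi> (t (Suc k)) powr (1/q) + \<delta> * \<sigma>) powr (q - 2)"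
        using K t01[OF k(1)] by (intro mult_left_mono) auto
      with Suc.IH[OF k(1)] a have "D (t (Suc k)) \<le> K * t k * (\<Phi> (t (Suc k)) powr (1/q) + \<delta> * \<sigma>) powr (q - 2) + K * \<delta> * (\<Phi> (t (Suc k)) powr (1/q) + \<delta> * \<sigma>) powr (q - 2)"
        by linarith
      also have "\<dots> = K * t (Suc k) * (\<Phi> (t (Suc k)) powr (1/q) + \<delta> * \<sigma>) powr (q - 2)"
        using tS by (simp add: algebra_simps)
      finally show ?case .
    qed
    have step: "\<Phi> (t (Suc k)) powr (2/q) \<le> \<Phi> (t k) powr (2/q) + 2 * c * \<sigma>\<^sup>2 * E * \<delta> * t (Suc k)"
      if k: "Suc k \<le> N" for k
    proof -
      have k0: "k \<le> N" using k by simp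
      define y where "y = \<Phi> (t k) powr (1/q)"
      have yc0: "y \<ge> c0" unfolding y_def c0_def using \<Phi>ge[OF t01[OF k0]] \<Phi>0 q by (intro powr_mono2) auto
      have yp: "y > 0" using yc0 c0 by simp
      have dPhi: "\<Phi> (t (Suc k)) - \<Phi> (t k) \<le> \<delta> * D (t (Suc k))"
        using I4[of "t (Suc k)" "t k"] t01[OF k0] t01[OF k] tS by (simp add: algebra_simps)
      have I6': "\<Phi> (t (Suc k)) powr (1/q) \<le> y + \<delta> * \<sigma>"
        using I6[of "t k" "t (Suc k)"] t01[OF k0] t01[OF k] tS \<delta> by (simp add: y_def)
      have "D (t (Suc k)) \<le> K * t (Suc k) * (\<Phi> (t (Suc k)) powr (1/q) + \<delta> * \<sigma>) powr (q - 2)"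
        by (rule Dk[OF k])
      also have "\<dots> \<le> K * t (Suc k) * (y + 2 * (\<delta> * \<sigma>)) powr (q - 2)"
        using I6' K t01[OF k] q \<delta> \<sigma> by (intro mult_left_mono powr_mono2) auto
      finally have Db: "D (t (Suc k)) \<le> K * t (Suc k) * (y + 2 * (\<delta> * \<sigma>)) powr (q - 2)" .
      have "\<Phi> (t (Suc k)) powr (2/q) \<le> \<Phi> (t k) powr (2/q) + (2/q) * \<Phi> (t k) powr (2/q - 1) * (\<Phi> (t (Suc k)) - \<Phi> (t k))"
        using tpos[OF k0] tpos[OF k] q by (intro concave_tangent) auto
      also have "\<dots> \<le> \<Phi> (t k) powr (2/q) + (2/q) * \<Phi> (t k) powr (2/q - 1) * (\<delta> * (K * t (Suc k) * (y + 2 * (\<delta> * \<sigma>)) powr (q - 2)))"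
        using dPhi Db \<delta> q by (intro add_left_mono mult_left_mono order.trans[OF dPhi]) auto
      also have "(2/q) * \<Phi> (t k) powr (2/q - 1) * (\<delta> * (K * t (Suc k) * (y + 2 * (\<delta> * \<sigma>)) powr (q - 2)))
          = 2 * c * \<sigma>\<^sup>2 * \<delta> * t (Suc k) * (y powr (2 - q) * (y + 2 * (\<delta> * \<sigma>)) powr (q - 2))"
      proof -
        have "\<Phi> (t k) powr (2/q - 1) = y powr (2 - q)"
          unfolding y_def using q0 by (simp add: powr_powr field_simps)
        then show ?thesis using q0 by (simp add: K_def field_simps)
      qed
      also have "\<dots> \<le> 2 * c * \<sigma>\<^sup>2 * \<delta> * t (Suc k) * E"
        unfolding E_def using c \<delta> t01[OF k]
        by (intro mult_left_mono partition_step_factor[OF q c0 yc0]) (use \<sigma> \<delta> in auto)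
      finally show ?thesis by (simp add: mult_ac)
    qed
    have hk: "\<Phi> (t k) powr (2/q) \<le> \<Phi> 0 powr (2/q) + c * \<sigma>\<^sup>2 * E * (real k * (real k + 1)) / (real N)\<^sup>2"
      if "k \<le> N" for k
      using that
    proof (induction k)
      case 0 then show ?case by (simp add: t_def)
    next
      case (Suc k)
      then have k: "k \<le> N" "Suc k \<le> N" by auto
      have "\<Phi> (t (Suc k)) powr (2/q) \<le> \<Phi> 0 powr (2/q) + c * \<sigma>\<^sup>2 * E * (real k * (real k + 1)) / (real N)\<^sup>2 + 2 * c * \<sigma>\<^sup>2 * E * \<delta> * t (Suc k)"
        using step[OF k(2)] Suc.IH[OF k(1)] by linarith
      also have "\<dots> = \<Phi> 0 powr (2/q) + c * \<sigma>\<^sup>2 * E * (real (Suc k) * (real (Suc k) + 1)) / (real N)\<^sup>2"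
        using N by (simp add: \<delta>_def t_def field_simps power2_eq_square)
      finally show ?case .
    qed
    have "t N = 1" using N by (simp add: t_def)
    with hk[of N] have "\<Phi> 1 powr (2/q) \<le> \<Phi> 0 powr (2/q) + c * \<sigma>\<^sup>2 * E * (real N * (real N + 1)) / (real N)\<^sup>2"
      by simp
    also have "c * \<sigma>\<^sup>2 * E * (real N * (real N + 1)) / (real N)\<^sup>2 = c * \<sigma>\<^sup>2 * (E * ((real N + 1) / real N))"
      using N by (simp add: field_simps power2_eq_square)
    finally show ?thesis by (simp add: E_def \<delta>_def)
  qed
  define a where "a = (\<lambda>n::nat. \<Phi> 0 powr (2/q) + c * \<sigma>\<^sup>2 * ((1 + 2 * (\<sigma> * inverse (real (Suc n))) / c0) powr (q - 2) * (1 + inverse (real (Suc n)))))"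
  have "a \<longlonglongrightarrow> \<Phi> 0 powr (2/q) + c * \<sigma>\<^sup>2 * ((1 + 2 * (\<sigma> * 0) / c0) powr (q - 2) * (1 + 0))"
    unfolding a_def by (intro tendsto_intros LIMSEQ_inverse_real_of_nat) (use c0 in auto)
  then have lim: "a \<longlonglongrightarrow> \<Phi> 0 powr (2/q) + c * \<sigma>\<^sup>2" by simp
  have "\<Phi> 1 powr (2/q) \<le> a n" for n
  proof -
    have "(real (Suc n) + 1) / real (Suc n) = 1 + inverse (real (Suc n))" by (simp add: field_simps)
    then show ?thesis using main[of "Suc n"] by (simp add: a_def divide_inverse)
  qed
  then show ?thesis by (intro LIMSEQ_le_const[OF lim]) auto
qed

lemma vec_nth_meas[measurable]: "(\<lambda>x::real^'d. x $ i) \<in> borel_measurable borel"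
  by (intro borel_measurable_continuous_onI linear_continuous_on bounded_linear_vec_nth)

lemma lsnorm_meas[measurable]: "lsnorm s \<in> borel_measurable (borel :: (real^'d) measure)"
proof -
  have "lsnorm s = (\<lambda>v::real^'d. (\<Sum>i\<in>UNIV. \<bar>v $ i\<bar> ^ s) powr (1 / real s))"
    by (simp add: lsnorm_def fun_eq_iff)
  also have "\<dots> \<in> borel_measurable borel" by measurable
  finally show ?thesis .
qed

lemma lsnorm_meas_comp[measurable]: "f \<in> borel_measurable M \<Longrightarrow> (\<lambda>x. lsnorm s (f x :: real^'d)) \<in> borel_measurable M"
  by (rule measurable_compose[OF _ lsnorm_meas])

lemma fdir_meas[measurable]:
  fixes f g :: "'a \<Rightarrow> real^'d"
  assumes [measurable]: "f \<in> borel_measurable M" "g \<in> borel_measurable M"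
  shows "(\<lambda>x. fdir s q (f x) (g x)) \<in> borel_measurable M"
  unfolding fdir_def odot_inner by measurable

lemma fdir_scale: "fdir s q x (c *\<^sub>R u) = c * fdir s q x u"
  by (simp add: fdir_def)

lemma fdir_diff: "fdir s q x (u - v) = fdir s q x u - fdir s q x v"
  by (simp add: fdir_def inner_diff_right algebra_simps)

lemma young_q:
  fixes x y q :: real
  assumes q: "q > 1" and x: "x \<ge> 0" and y: "y \<ge> 0"
  shows "x powr (q - 1) * y \<le> x powr q + y powr q"
proof -
  have p: "q / (q - 1) > 1" using q by simp
  have pq: "1 / (q / (q - 1)) + 1 / q = 1" using q by (simp add: field_simps)
  have "x powr (q - 1) * y \<le> (x powr (q - 1)) powr (q / (q - 1)) + y powr q"
    by (rule young_simple[OF p q pq]) (use y in auto)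
  also have "(x powr (q - 1)) powr (q / (q - 1)) = x powr q" using q by (simp add: powr_powr)
  finally show ?thesis .
qed

context
  fixes P :: "'x measure" and U :: "'x \<Rightarrow> real^'d" and s :: nat and q :: real
  assumes P: "prob_space P" and s: "s \<ge> 2" "even s" and q: "q \<ge> 2"
    and U[measurable]: "U \<in> borel_measurable P"
    and Ui: "integrable P (\<lambda>x. lsnorm s (U x) powr q)"
begin

interpretation prob_space P by (rule P)

lemma s0: "s > 0" using s by simp

lemma int_line: "integrable P (\<lambda>x. lsnorm s (b + t *\<^sub>R U x) powr q)"
proof -
  have g: "integrable P (\<lambda>x. (\<bar>t\<bar> * lsnorm s (U x)) powr q)"
    using Ui by (simp add: powr_mult lsnorm_nonneg)
  have "integrable P (\<lambda>x. (lsnorm s b + \<bar>t\<bar> * lsnorm s (U x)) powr q)"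
    by (rule integrable_powr_sum[OF _ _ _ _ _ _ g]) (use q in \<open>auto simp: lsnorm_nonneg\<close>)
  then show ?thesis
  proof (rule Bochner_Integration.integrable_bound)
    show "AE x in P. norm (lsnorm s (b + t *\<^sub>R U x) powr q) \<le> norm ((lsnorm s b + \<bar>t\<bar> * lsnorm s (U x)) powr q)"
    proof (intro AE_I2)
      fix x
      have "lsnorm s (b + t *\<^sub>R U x) \<le> lsnorm s b + lsnorm s (t *\<^sub>R U x)" by (rule lsnorm_triangle[OF s(1)])
      also have "lsnorm s (t *\<^sub>R U x) = \<bar>t\<bar> * lsnorm s (U x)" using s0 by (rule lsnorm_scale)
      finally have "lsnorm s (b + t *\<^sub>R U x) powr q \<le> (lsnorm s b + \<bar>t\<bar> * lsnorm s (U x)) powr q"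
        using q by (intro powr_mono2) (auto simp: lsnorm_nonneg)
      then show "norm (lsnorm s (b + t *\<^sub>R U x) powr q) \<le> norm ((lsnorm s b + \<bar>t\<bar> * lsnorm s (U x)) powr q)"
        by simp
    qed
  qed measurable
qed

lemma int_fdir: "integrable P (\<lambda>x. fdir s q (b + t *\<^sub>R U x) (U x))"
proof (rule Bochner_Integration.integrable_bound)
  show "integrable P (\<lambda>x. q * (lsnorm s (b + t *\<^sub>R U x) powr q + lsnorm s (U x) powr q))"
    using int_line[of b t] Ui by auto
  show "AE x in P. norm (fdir s q (b + t *\<^sub>R U x) (U x)) \<le> norm (q * (lsnorm s (b + t *\<^sub>R U x) powr q + lsnorm s (U x) powr q))"
  proof (intro AE_I2)
    fix x
    have "\<bar>fdir s q (b + t *\<^sub>R U x) (U x)\<bar> \<le> \<bar>q\<bar> * lsnorm s (b + t *\<^sub>R U x) powr (q - 1) * lsnorm s (U x)"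
      by (rule fdir_bound[OF s])
    also have "\<dots> \<le> q * (lsnorm s (b + t *\<^sub>R U x) powr q + lsnorm s (U x) powr q)"
      using young_q[of q "lsnorm s (b + t *\<^sub>R U x)" "lsnorm s (U x)"] q
      by (simp add: lsnorm_nonneg mult.assoc)
    finally show "norm (fdir s q (b + t *\<^sub>R U x) (U x)) \<le> norm (q * (lsnorm s (b + t *\<^sub>R U x) powr q + lsnorm s (U x) powr q))"
      using q by (simp add: lsnorm_nonneg)
  qed
qed measurable

lemma int_comp: "integrable P (\<lambda>x. U x $ i)"
proof (rule Bochner_Integration.integrable_bound)
  show "integrable P (\<lambda>x. 1 + lsnorm s (U x) powr q)" using Ui by auto
  show "AE x in P. norm (U x $ i) \<le> norm (1 + lsnorm s (U x) powr q)"
  proof (intro AE_I2)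
    fix x
    have "\<bar>U x $ i\<bar> \<le> lsnorm s (U x)" by (rule lsnorm_comp_le[OF s0])
    also have "lsnorm s (U x) \<le> 1 + lsnorm s (U x) powr q"
    proof (cases "lsnorm s (U x) \<le> 1")
      case True
      have "0 \<le> lsnorm s (U x) powr q" by simp
      with True show ?thesis by linarith
    next
      case False
      then have "lsnorm s (U x) powr 1 \<le> lsnorm s (U x) powr q" using q by (intro powr_mono) auto
      then show ?thesis using False by simp
    qed
    finally show "norm (U x $ i) \<le> norm (1 + lsnorm s (U x) powr q)" by simp
  qed
qed measurable

end

lemma holder_moment:
  fixes A B :: "'a \<Rightarrow> real"
  assumes q: "q \<ge> 2" and [measurable]: "A \<in> borel_measurable M" "B \<in> borel_measurable M"
    and A0: "\<And>x. A x \<ge> 0" and B0: "\<And>x. B x \<ge> 0"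
    and Ai: "integrable M (\<lambda>x. A x powr q)" and Bi: "integrable M (\<lambda>x. B x powr q)"
    and Bpos: "(\<integral>x. B x powr q \<partial>M) > 0"
  shows "integrable M (\<lambda>x. A x ^ 2 * B x powr (q - 2))"
    and "(\<integral>x. A x ^ 2 * B x powr (q - 2) \<partial>M) \<le> (\<integral>x. A x powr q \<partial>M) powr (2/q) * (\<integral>x. B x powr q \<partial>M) powr ((q - 2)/q)"
proof -
  have A2: "A x ^ 2 = A x powr 2" for x using A0[of x] by (simp add: powr_nat_nonneg)
  have A2f: "(\<lambda>x. A x ^ 2) = (\<lambda>x. A x powr 2)" using A2 by auto
  have "integrable M (\<lambda>x. A x ^ 2 * B x powr (q - 2)) \<and>
      (\<integral>x. A x ^ 2 * B x powr (q - 2) \<partial>M) \<le> (\<integral>x. A x powr q \<partial>M) powr (2/q) * (\<integral>x. B x powr q \<partial>M) powr ((q - 2)/q)"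
  proof (cases "q = 2")
    case True
    have Ai2: "integrable M (\<lambda>x. A x ^ 2)" using Ai True by (simp only: A2f)
    have b1: "A x ^ 2 * B x powr (q - 2) \<le> A x ^ 2" for x
      using True by (cases "B x = 0") auto
    have i: "integrable M (\<lambda>x. A x ^ 2 * B x powr (q - 2))"
    proof (rule Bochner_Integration.integrable_bound[OF Ai2])
      show "AE x in M. norm (A x ^ 2 * B x powr (q - 2)) \<le> norm (A x ^ 2)"
        using b1 by (auto simp: True)
    qed measurable
    have "(\<integral>x. A x ^ 2 * B x powr (q - 2) \<partial>M) \<le> (\<integral>x. A x ^ 2 \<partial>M)"
      by (intro integral_mono[OF i Ai2] b1)
    also have "(\<integral>x. A x ^ 2 \<partial>M) = (\<integral>x. A x powr q \<partial>M)" using True by (simp only: A2f)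
    also have "\<dots> = (\<integral>x. A x powr q \<partial>M) powr (2/q) * (\<integral>x. B x powr q \<partial>M) powr ((q - 2)/q)"
    proof -
      have "(\<integral>x. A x powr q \<partial>M) \<ge> 0" by (intro integral_nonneg_AE) auto
      then show ?thesis using True Bpos by simp
    qed
    finally show ?thesis using i by simp
  next
    case False
    then have q2: "q > 2" using q by simp
    have p: "q / 2 > 1" "q / (q - 2) > 1" using q2 by auto
    have pq: "1 / (q / 2) + 1 / (q / (q - 2)) = 1" using q2 by (simp add: field_simps)
    have e1: "(A x ^ 2) powr (q / 2) = A x powr q" for x
    proof -
      have "(A x ^ 2) powr (q / 2) = (A x powr 2) powr (q / 2)" by (simp only: A2)
      also have "\<dots> = A x powr q" by (subst powr_powr) simp
      finally show ?thesis .
    qed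
    have e2: "(B x powr (q - 2)) powr (q / (q - 2)) = B x powr q" for x using q2 by (subst powr_powr) simp
    have i1: "integrable M (\<lambda>x. (A x ^ 2) powr (q / 2))" using Ai by (simp only: e1)
    have i2: "integrable M (\<lambda>x. (B x powr (q - 2)) powr (q / (q - 2)))" using Bi by (simp only: e2)
    note H = holder_integral[OF p pq, of "\<lambda>x. A x ^ 2" M "\<lambda>x. B x powr (q - 2)"]
    have "integrable M (\<lambda>x. A x ^ 2 * B x powr (q - 2))"
      using H(1)[OF _ _ _ _ i1 i2] by auto
    moreover have "(\<integral>x. A x ^ 2 * B x powr (q - 2) \<partial>M) \<le> (\<integral>x. A x powr q \<partial>M) powr (2/q) * (\<integral>x. B x powr q \<partial>M) powr ((q - 2)/q)"
    proof -
      have "(\<integral>x. A x ^ 2 * B x powr (q - 2) \<partial>M) \<le> (\<integral>x. (A x ^ 2) powr (q / 2) \<partial>M) powr (1 / (q / 2)) *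
            (\<integral>x. (B x powr (q - 2)) powr (q / (q - 2)) \<partial>M) powr (1 / (q / (q - 2)))"
        using H(2)[OF _ _ _ _ i1 i2] by auto
      also have "\<dots> = (\<integral>x. A x powr q \<partial>M) powr (2/q) * (\<integral>x. B x powr q \<partial>M) powr ((q - 2)/q)"
        by (simp only: e1 e2) simp
      finally show ?thesis .
    qed
    ultimately show ?thesis by simp
  qed
  then show "integrable M (\<lambda>x. A x ^ 2 * B x powr (q - 2))"
    and "(\<integral>x. A x ^ 2 * B x powr (q - 2) \<partial>M) \<le> (\<integral>x. A x powr q \<partial>M) powr (2/q) * (\<integral>x. B x powr q \<partial>M) powr ((q - 2)/q)"
    by auto
qed

lemma rio:
  fixes P :: "'x measure" and U :: "'x \<Rightarrow> real^'d" and s :: nat and q :: real and b :: "real^'d"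
  assumes P: "prob_space P" and s: "s \<ge> 2" "even s" and q: "q \<ge> 2"
    and U[measurable]: "U \<in> borel_measurable P"
    and Ui: "integrable P (\<lambda>x. lsnorm s (U x) powr q)"
    and U0: "\<And>i. (\<integral>x. U x $ i \<partial>P) = 0"
  shows "(\<integral>x. lsnorm s (b + U x) powr q \<partial>P) powr (2/q)
     \<le> lsnorm s b ^ 2 + (max q (real s) - 1) * (\<integral>x. lsnorm s (U x) powr q \<partial>P) powr (2/q)"
proof -
  interpret prob_space P by (rule P)
  have s0: "s > 0" using s by simp
  have q0: "q > 0" using q by simp
  note il = int_line[OF P s q U Ui]
  note ifd = int_fdir[OF P s q U Ui]
  note ic = int_comp[OF P s q U Ui]
  define I where "I = (\<integral>x. lsnorm s (U x) powr q \<partial>P)"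
  have I0: "I \<ge> 0" unfolding I_def by (intro integral_nonneg_AE) auto
  have m1: "max q (real s) - 1 \<ge> 1" using q by (simp add: max_def)
  show ?thesis
  proof (cases "b = 0")
    case True
    have "I powr (2/q) \<le> (max q (real s) - 1) * I powr (2/q)"
      using m1 by (simp add: mult_le_cancel_right1)
    then show ?thesis using True s0 by (simp add: I_def)
  next
    case False
    define \<Phi> where "\<Phi> = (\<lambda>t. \<integral>x. lsnorm s (b + t *\<^sub>R U x) powr q \<partial>P)"
    define D where "D = (\<lambda>t. \<integral>x. fdir s q (b + t *\<^sub>R U x) (U x) \<partial>P)"
    define \<sigma> where "\<sigma> = I powr (1/q)"
    have \<sigma>: "\<sigma> \<ge> 0" by (simp add: \<sigma>_def)
    have sig2: "I powr (2/q) = \<sigma>\<^sup>2"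
    proof -
      have "\<sigma>\<^sup>2 = \<sigma> powr 2" using \<sigma> by (rule powr_nat_nonneg[of 2, simplified, symmetric])
      also have "\<dots> = I powr (2/q)" by (simp add: \<sigma>_def powr_powr)
      finally show ?thesis by simp
    qed
    have Nb: "lsnorm s b > 0" using False lsnorm_eq_0_iff[OF s0, of b] lsnorm_nonneg[of s b] by simp
    have \<Phi>0: "\<Phi> 0 = lsnorm s b powr q" by (simp add: \<Phi>_def prob_space)
    have D0: "D 0 = 0"
    proof -
      have "D 0 = (\<integral>x. q * lsnorm s b powr (q - real s) * (\<Sum>i\<in>UNIV. (b $ i) ^ (s - 1) * U x $ i) \<partial>P)"
        by (simp add: D_def fdir_def odot_inner)
      also have "\<dots> = q * lsnorm s b powr (q - real s) * (\<integral>x. (\<Sum>i\<in>UNIV. (b $ i) ^ (s - 1) * U x $ i) \<partial>P)"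
        by (rule integral_mult_right_zero)
      also have "(\<integral>x. (\<Sum>i\<in>UNIV. (b $ i) ^ (s - 1) * U x $ i) \<partial>P) = (\<Sum>i\<in>UNIV. \<integral>x. (b $ i) ^ (s - 1) * U x $ i \<partial>P)"
        by (rule Bochner_Integration.integral_sum) (use ic in auto)
      also have "\<dots> = 0" by (simp add: U0)
      finally show ?thesis by simp
    qed
    have I4: "\<Phi> t + (t' - t) * D t \<le> \<Phi> t'" for t t'
    proof -
      have "\<Phi> t + (t' - t) * D t = (\<integral>x. lsnorm s (b + t *\<^sub>R U x) powr q + (t' - t) * fdir s q (b + t *\<^sub>R U x) (U x) \<partial>P)"
        unfolding \<Phi>_def D_def using il ifd by simp
      also have "\<dots> \<le> \<Phi> t'"
        unfolding \<Phi>_def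
      proof (rule integral_mono)
        show "integrable P (\<lambda>x. lsnorm s (b + t *\<^sub>R U x) powr q + (t' - t) * fdir s q (b + t *\<^sub>R U x) (U x))"
          using il ifd by simp
        show "integrable P (\<lambda>x. lsnorm s (b + t' *\<^sub>R U x) powr q)" by (rule il)
        fix x
        have "lsnorm s (b + t *\<^sub>R U x) powr q + fdir s q (b + t *\<^sub>R U x) ((b + t' *\<^sub>R U x) - (b + t *\<^sub>R U x)) \<le> lsnorm s (b + t' *\<^sub>R U x) powr q"
          by (rule grad_ineq[OF s]) (use q in simp)
        moreover have "(b + t' *\<^sub>R U x) - (b + t *\<^sub>R U x) = (t' - t) *\<^sub>R U x" by (simp add: algebra_simps)
        ultimately show "lsnorm s (b + t *\<^sub>R U x) powr q + (t' - t) * fdir s q (b + t *\<^sub>R U x) (U x) \<le> lsnorm s (b + t' *\<^sub>R U x) powr q"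
          by (simp add: fdir_scale)
      qed
      finally show ?thesis .
    qed
    have \<Phi>pos: "\<Phi> t > 0" for t
    proof -
      have "lsnorm s b powr q > 0" using Nb by simp
      moreover have "\<Phi> 0 \<le> \<Phi> t" using I4[of 0 t] D0 by simp
      ultimately show ?thesis using \<Phi>0 by linarith
    qed
    have nline: "lsnorm s (b + t' *\<^sub>R U x) \<le> lsnorm s (b + t *\<^sub>R U x) + (t' - t) * lsnorm s (U x)" if "t \<le> t'" for t t' x
    proof -
      have "b + t' *\<^sub>R U x = (b + t *\<^sub>R U x) + (t' - t) *\<^sub>R U x" by (simp add: algebra_simps)
      then have "lsnorm s (b + t' *\<^sub>R U x) \<le> lsnorm s (b + t *\<^sub>R U x) + lsnorm s ((t' - t) *\<^sub>R U x)"
        using lsnorm_triangle[OF s(1)] by metis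
      also have "lsnorm s ((t' - t) *\<^sub>R U x) = (t' - t) * lsnorm s (U x)" using that s0 by (simp add: lsnorm_scale)
      finally show ?thesis .
    qed
    have iscal: "integrable P (\<lambda>x. (c * lsnorm s (U x)) powr q)" if "c \<ge> 0" for c
      using Ui that by (simp add: powr_mult lsnorm_nonneg)
    have intscal: "(\<integral>x. (c * lsnorm s (U x)) powr q \<partial>P) powr (1/q) = c * \<sigma>" if "c \<ge> 0" for c
    proof -
      have "(\<integral>x. (c * lsnorm s (U x)) powr q \<partial>P) = c powr q * I"
        using that by (simp add: powr_mult lsnorm_nonneg I_def)
      then have "(\<integral>x. (c * lsnorm s (U x)) powr q \<partial>P) powr (1/q) = (c powr q * I) powr (1/q)" by simp
      also have "\<dots> = c * \<sigma>" using that I0 q0 by (simp add: powr_mult powr_powr \<sigma>_def)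
      finally show ?thesis .
    qed
    have mink0: "(\<integral>x. (lsnorm s (b + t *\<^sub>R U x) + c * lsnorm s (U x)) powr q \<partial>P) powr (1/q) \<le> \<Phi> t powr (1/q) + c * \<sigma>"
      if "c \<ge> 0" for t c
    proof -
      have "(\<integral>x. (lsnorm s (b + t *\<^sub>R U x) + c * lsnorm s (U x)) powr q \<partial>P) powr (1/q)
          \<le> (\<integral>x. lsnorm s (b + t *\<^sub>R U x) powr q \<partial>P) powr (1/q) + (\<integral>x. (c * lsnorm s (U x)) powr q \<partial>P) powr (1/q)"
        by (rule minkowski_integral) (use q that il iscal in \<open>auto simp: lsnorm_nonneg\<close>)
      then show ?thesis using intscal[of c] that by (simp add: \<Phi>_def)
    qed
    have mink: "(\<integral>x. (lsnorm s (b + t *\<^sub>R U x) + (t' - t) * lsnorm s (U x)) powr q \<partial>P) powr (1/q) \<le> \<Phi> t powr (1/q) + (t' - t) * \<sigma>"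
      if "t \<le> t'" for t t'
      using mink0[of "t' - t" t] that by simp
    have I6: "\<Phi> t' powr (1/q) \<le> \<Phi> t powr (1/q) + (t' - t) * \<sigma>" if "t \<le> t'" for t t'
    proof -
      have "\<Phi> t' \<le> (\<integral>x. (lsnorm s (b + t *\<^sub>R U x) + (t' - t) * lsnorm s (U x)) powr q \<partial>P)"
        unfolding \<Phi>_def
      proof (rule integral_mono)
        show "integrable P (\<lambda>x. (lsnorm s (b + t *\<^sub>R U x) + (t' - t) * lsnorm s (U x)) powr q)"
          by (rule integrable_powr_sum) (use q that il iscal in \<open>auto simp: lsnorm_nonneg\<close>)
        fix x show "lsnorm s (b + t' *\<^sub>R U x) powr q \<le> (lsnorm s (b + t *\<^sub>R U x) + (t' - t) * lsnorm s (U x)) powr q"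
          using nline[OF that, of x] q by (intro powr_mono2) (auto simp: lsnorm_nonneg)
      qed (rule il)
      then have "\<Phi> t' powr (1/q) \<le> (\<integral>x. (lsnorm s (b + t *\<^sub>R U x) + (t' - t) * lsnorm s (U x)) powr q \<partial>P) powr (1/q)"
        using \<Phi>pos[of t'] q by (intro powr_mono2) auto
      with mink[OF that] show ?thesis by linarith
    qed
    have I5: "D t' - D t \<le> q * (max q (real s) - 1) * (t' - t) * \<sigma>\<^sup>2 * (\<Phi> t' powr (1/q) + (t' - t) * \<sigma>) powr (q - 2)"
      if tt: "t \<le> t'" for t t'
    proof -
      define Y where "Y = (\<lambda>x. lsnorm s (b + t' *\<^sub>R U x) + (t' - t) * lsnorm s (U x))"
      have Y0: "Y x \<ge> 0" for x using tt by (simp add: Y_def lsnorm_nonneg)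
      have Yi: "integrable P (\<lambda>x. Y x powr q)" unfolding Y_def
        by (rule integrable_powr_sum) (use q tt il iscal in \<open>auto simp: lsnorm_nonneg\<close>)
      have Ypos: "(\<integral>x. Y x powr q \<partial>P) > 0"
      proof -
        have "\<Phi> t' \<le> (\<integral>x. Y x powr q \<partial>P)" unfolding \<Phi>_def
        proof (rule integral_mono[OF il Yi])
          fix x show "lsnorm s (b + t' *\<^sub>R U x) powr q \<le> Y x powr q"
            using tt q by (intro powr_mono2) (auto simp: Y_def lsnorm_nonneg)
        qed
        then show ?thesis using \<Phi>pos[of t'] by simp
      qed
      have Am: "(\<lambda>x. lsnorm s (U x)) \<in> borel_measurable P" by measurable
      have Ym: "Y \<in> borel_measurable P" unfolding Y_def by measurable
      note HM = holder_moment[OF q Am Ym lsnorm_nonneg Y0 Ui Yi Ypos]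
      have "D t' - D t = (\<integral>x. fdir s q (b + t' *\<^sub>R U x) (U x) - fdir s q (b + t *\<^sub>R U x) (U x) \<partial>P)"
        unfolding D_def using ifd by simp
      also have "\<dots> \<le> (\<integral>x. (q * (max q (real s) - 1) * (t' - t)) * (lsnorm s (U x) ^ 2 * Y x powr (q - 2)) \<partial>P)"
      proof (rule integral_mono)
        show "integrable P (\<lambda>x. fdir s q (b + t' *\<^sub>R U x) (U x) - fdir s q (b + t *\<^sub>R U x) (U x))" using ifd by simp
        show "integrable P (\<lambda>x. (q * (max q (real s) - 1) * (t' - t)) * (lsnorm s (U x) ^ 2 * Y x powr (q - 2)))"
          using HM(1) by (simp add: lsnorm_nonneg Y_def)
        fix x
        show "fdir s q (b + t' *\<^sub>R U x) (U x) - fdir s q (b + t *\<^sub>R U x) (U x) \<le> (q * (max q (real s) - 1) * (t' - t)) * (lsnorm s (U x) ^ 2 * Y x powr (q - 2))"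
          using fdir_lip[OF s q tt, of b "U x"] by (simp add: Y_def mult_ac)
      qed
      also have "\<dots> = (q * (max q (real s) - 1) * (t' - t)) * (\<integral>x. lsnorm s (U x) ^ 2 * Y x powr (q - 2) \<partial>P)"
        by simp
      also have "\<dots> \<le> (q * (max q (real s) - 1) * (t' - t)) * (I powr (2/q) * (\<integral>x. Y x powr q \<partial>P) powr ((q - 2)/q))"
        using HM(2) q tt m1 by (intro mult_left_mono) (auto simp: I_def lsnorm_nonneg)
      also have "\<dots> \<le> (q * (max q (real s) - 1) * (t' - t)) * (I powr (2/q) * (\<Phi> t' powr (1/q) + (t' - t) * \<sigma>) powr (q - 2))"
      proof -
        have "(\<integral>x. Y x powr q \<partial>P) powr ((q - 2)/q) = ((\<integral>x. Y x powr q \<partial>P) powr (1/q)) powr (q - 2)"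
          by (simp add: powr_powr)
        also have "\<dots> \<le> (\<Phi> t' powr (1/q) + (t' - t) * \<sigma>) powr (q - 2)"
        proof -
          have "(\<integral>x. Y x powr q \<partial>P) powr (1/q) \<le> \<Phi> t' powr (1/q) + (t' - t) * \<sigma>"
            using mink0[of "t' - t" t'] tt by (simp add: Y_def)
          then show ?thesis using q by (intro powr_mono2) auto
        qed
        finally show ?thesis using q tt m1 by (intro mult_left_mono) auto
      qed
      also have "I powr (2/q) = \<sigma>\<^sup>2" by (rule sig2)
      finally show ?thesis by (simp add: mult_ac)
    qed
    have PB: "\<Phi> 1 powr (2/q) \<le> \<Phi> 0 powr (2/q) + (max q (real s) - 1) * \<sigma>\<^sup>2"
      by (rule partition_bound[OF q _ \<sigma> \<Phi>pos D0 I4 I5 I6]) (use m1 in auto)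
    have "\<Phi> 0 powr (2/q) = lsnorm s b ^ 2"
    proof -
      have "\<Phi> 0 powr (2/q) = lsnorm s b powr 2" using q0 by (simp add: \<Phi>0 powr_powr)
      also have "\<dots> = lsnorm s b ^ 2" by (rule powr_nat_nonneg[of 2, simplified]) (simp add: lsnorm_nonneg)
      finally show ?thesis .
    qed
    moreover have "\<Phi> 1 = (\<integral>x. lsnorm s (b + U x) powr q \<partial>P)" by (simp add: \<Phi>_def)
    ultimately show ?thesis using PB sig2 by (simp add: I_def)
  qed
qed

lemma ls_smooth:
  fixes a v :: "real^'d"
  assumes s: "s \<ge> 2" "even s"
  shows "lsnorm s (a + v) ^ 2 \<le> lsnorm s a ^ 2 + fdir s 2 a v + (real s - 1) * lsnorm s v ^ 2"
proof -
  define f where "f = (\<lambda>t. lsnorm s (a + t *\<^sub>R v) powr 2)"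
  define F where "F = (\<lambda>t. fdir s 2 (a + t *\<^sub>R v) v)"
  define V where "V = lsnorm s v ^ 2"
  have V: "V \<ge> 0" by (simp add: V_def)
  have sq: "lsnorm s x powr 2 = lsnorm s x ^ 2" for x :: "real^'d"
    by (rule powr_nat_nonneg[of 2, simplified]) (simp add: lsnorm_nonneg)
  have m: "max 2 (real s) = real s" using s by simp
  have step1: "f t' - f t \<le> (t' - t) * F t'" for t t'
  proof -
    have e: "(a + t *\<^sub>R v) - (a + t' *\<^sub>R v) = (t - t') *\<^sub>R v" by (simp add: algebra_simps)
    have "lsnorm s (a + t' *\<^sub>R v) powr 2 + fdir s 2 (a + t' *\<^sub>R v) ((a + t *\<^sub>R v) - (a + t' *\<^sub>R v)) \<le> lsnorm s (a + t *\<^sub>R v) powr 2"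
      by (rule grad_ineq[OF s]) simp
    then have h: "f t' + (t - t') * F t' \<le> f t"
      unfolding e fdir_scale f_def F_def .
    have "(t - t') * F t' = - ((t' - t) * F t')" by (simp add: algebra_simps)
    with h show ?thesis by linarith
  qed
  have step2: "F t' \<le> F 0 + 2 * (real s - 1) * t' * V" if "t' \<ge> 0" for t'
  proof -
    have "F t' - F 0 \<le> 2 * (max 2 (real s) - 1) * (t' - 0) * lsnorm s v ^ 2 * (lsnorm s (a + t' *\<^sub>R v) + (t' - 0) * lsnorm s v) powr (2 - 2)"
      using fdir_lip[OF s _ that, of 2 a v] by (simp add: F_def)
    also have "\<dots> \<le> 2 * (max 2 (real s) - 1) * t' * lsnorm s v ^ 2"
    proof -
      have "(lsnorm s (a + t' *\<^sub>R v) + (t' - 0) * lsnorm s v) powr (2 - 2) \<le> 1" by simp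
      moreover have "0 \<le> 2 * (max 2 (real s) - 1) * t' * lsnorm s v ^ 2" using that s by simp
      ultimately show ?thesis by (simp add: mult_left_le)
    qed
    finally show ?thesis using m by (simp add: V_def)
  qed
  have main: "f 1 \<le> f 0 + F 0 + (real s - 1) * V * ((real N + 1) / real N)" if N: "N \<ge> 1" for N :: nat
  proof -
    define t where "t = (\<lambda>k::nat. real k / real N)"
    have hk: "f (t k) \<le> f 0 + t k * F 0 + (real s - 1) * V * (real k * (real k + 1)) / (real N)\<^sup>2" for k
    proof (induction k)
      case 0 then show ?case by (simp add: t_def)
    next
      case (Suc k)
      have tk: "t (Suc k) - t k = 1 / real N" "t (Suc k) \<ge> 0" using N by (auto simp: t_def field_simps)
      have "f (t (Suc k)) \<le> f (t k) + (t (Suc k) - t k) * F (t (Suc k))" using step1[of "t (Suc k)" "t k"] by simp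
      also have "\<dots> \<le> f (t k) + (t (Suc k) - t k) * (F 0 + 2 * (real s - 1) * t (Suc k) * V)"
        using step2[OF tk(2)] tk N by (intro add_left_mono mult_left_mono) auto
      also have "\<dots> \<le> f 0 + t k * F 0 + (real s - 1) * V * (real k * (real k + 1)) / (real N)\<^sup>2
          + (t (Suc k) - t k) * (F 0 + 2 * (real s - 1) * t (Suc k) * V)"
        using Suc.IH by linarith
      also have "\<dots> = f 0 + t (Suc k) * F 0 + (real s - 1) * V * (real (Suc k) * (real (Suc k) + 1)) / (real N)\<^sup>2"
        using N by (simp add: t_def field_simps power2_eq_square)
      finally show ?case .
    qed
    have "t N = 1" using N by (simp add: t_def)
    with hk[of N] have "f 1 \<le> f 0 + F 0 + (real s - 1) * V * (real N * (real N + 1)) / (real N)\<^sup>2" by simp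
    also have "(real s - 1) * V * (real N * (real N + 1)) / (real N)\<^sup>2 = (real s - 1) * V * ((real N + 1) / real N)"
      using N by (simp add: field_simps power2_eq_square)
    finally show ?thesis by simp
  qed
  define b where "b = (\<lambda>n::nat. f 0 + F 0 + (real s - 1) * V * (1 + inverse (real (Suc n))))"
  have "b \<longlonglongrightarrow> f 0 + F 0 + (real s - 1) * V * (1 + 0)"
    unfolding b_def by (intro tendsto_intros LIMSEQ_inverse_real_of_nat)
  then have lim: "b \<longlonglongrightarrow> f 0 + F 0 + (real s - 1) * V" by simp
  have "f 1 \<le> b n" for n
  proof -
    have "(real (Suc n) + 1) / real (Suc n) = 1 + inverse (real (Suc n))" by (simp add: field_simps)
    then show ?thesis using main[of "Suc n"] by (simp add: b_def)
  qed
  then have "f 1 \<le> f 0 + F 0 + (real s - 1) * V" by (intro LIMSEQ_le_const[OF lim]) auto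
  then show ?thesis by (simp add: f_def F_def V_def sq)
qed

lemma lsnorm_le_one_plus:
  assumes q: "q \<ge> 1"
  shows "lsnorm s v \<le> 1 + lsnorm s v powr q"
proof (cases "lsnorm s v \<le> 1")
  case True
  have "0 \<le> lsnorm s v powr q" by simp
  with True show ?thesis by linarith
next
  case False
  then have "lsnorm s v powr 1 \<le> lsnorm s v powr q" using q by (intro powr_mono) auto
  then show ?thesis using False by simp
qed

lemma vec_integrable_lq:
  fixes V :: "'x \<Rightarrow> real^'d"
  assumes P: "prob_space P" and s: "s \<ge> 2" and q: "q \<ge> 1"
    and V[measurable]: "V \<in> borel_measurable P"
    and Vi: "integrable P (\<lambda>x. lsnorm s (V x) powr q)"
  shows "integrable P V"
proof -
  interpret prob_space P by (rule P)
  show ?thesis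
  proof (rule Bochner_Integration.integrable_bound)
    show "integrable P (\<lambda>x. real CARD('d) * (1 + lsnorm s (V x) powr q))" using Vi by auto
    show "AE x in P. norm (V x) \<le> norm (real CARD('d) * (1 + lsnorm s (V x) powr q))"
    proof (intro AE_I2)
      fix x
      have "norm (V x) \<le> (\<Sum>i\<in>UNIV. \<bar>V x $ i\<bar>)" by (rule norm_le_l1_cart)
      also have "\<dots> \<le> (\<Sum>i\<in>(UNIV::'d set). 1 + lsnorm s (V x) powr q)"
      proof (intro sum_mono)
        fix i
        have "\<bar>V x $ i\<bar> \<le> lsnorm s (V x)" using s by (intro lsnorm_comp_le) auto
        then show "\<bar>V x $ i\<bar> \<le> 1 + lsnorm s (V x) powr q" using lsnorm_le_one_plus[OF q, of s "V x"] by linarith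
      qed
      also have "\<dots> = real CARD('d) * (1 + lsnorm s (V x) powr q)" by simp
      finally show "norm (V x) \<le> norm (real CARD('d) * (1 + lsnorm s (V x) powr q))" by simp
    qed
  qed measurable
qed

lemma jensen_vec:
  fixes Z :: "'x \<Rightarrow> real^'d"
  assumes P: "prob_space P" and s: "s \<ge> 2" "even s" and q: "q \<ge> 2"
    and Z[measurable]: "Z \<in> borel_measurable P"
    and Zi: "integrable P (\<lambda>x. lsnorm s (Z x) powr q)"
  shows "lsnorm s (\<integral>x. Z x \<partial>P) \<le> (\<integral>x. lsnorm s (Z x) powr q \<partial>P) powr (1/q)"
proof -
  interpret prob_space P by (rule P)
  have s0: "s > 0" using s by simp
  have ZI: "integrable P Z" by (rule vec_integrable_lq[OF P s(1) _ Z Zi]) (use q in auto)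
  define w where "w = (\<integral>x. Z x \<partial>P)"
  have NZi: "integrable P (\<lambda>x. lsnorm s (Z x))"
    using ZI lsnorm_le_one_plus
  proof -
    show ?thesis
    proof (rule Bochner_Integration.integrable_bound)
      show "integrable P (\<lambda>x. 1 + lsnorm s (Z x) powr q)" using Zi by auto
      show "AE x in P. norm (lsnorm s (Z x)) \<le> norm (1 + lsnorm s (Z x) powr q)"
        using lsnorm_le_one_plus[of q s] q by (auto simp: lsnorm_nonneg)
    qed measurable
  qed
  have step1: "lsnorm s w \<le> (\<integral>x. lsnorm s (Z x) \<partial>P)"
  proof -
    have "lsnorm s w ^ s = odot_pow w (s - 1) \<bullet> w" by (rule odot_inner_self[OF s0 s(2), symmetric])
    also have "\<dots> = (\<integral>x. odot_pow w (s - 1) \<bullet> Z x \<partial>P)"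
      unfolding w_def by (rule integral_bounded_linear[OF bounded_linear_inner_right ZI, symmetric])
    also have "\<dots> \<le> (\<integral>x. lsnorm s w ^ (s - 1) * lsnorm s (Z x) \<partial>P)"
    proof (rule integral_mono)
      show "integrable P (\<lambda>x. odot_pow w (s - 1) \<bullet> Z x)"
        by (rule integrable_bounded_linear[OF bounded_linear_inner_right ZI])
      show "integrable P (\<lambda>x. lsnorm s w ^ (s - 1) * lsnorm s (Z x))" using NZi by simp
      fix x show "odot_pow w (s - 1) \<bullet> Z x \<le> lsnorm s w ^ (s - 1) * lsnorm s (Z x)"
        by (rule odot_inner_le[OF s])
    qed
    also have "\<dots> = lsnorm s w ^ (s - 1) * (\<integral>x. lsnorm s (Z x) \<partial>P)" by simp
    finally have *: "lsnorm s w ^ (s - 1) * lsnorm s w \<le> lsnorm s w ^ (s - 1) * (\<integral>x. lsnorm s (Z x) \<partial>P)"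
      using s0 by simp
    show ?thesis
    proof (cases "lsnorm s w = 0")
      case True then show ?thesis by (simp add: integral_nonneg_AE lsnorm_nonneg)
    next
      case False
      then have "lsnorm s w ^ (s - 1) > 0" using lsnorm_nonneg[of s w] by simp
      with * show ?thesis by simp
    qed
  qed
  have step2: "(\<integral>x. lsnorm s (Z x) \<partial>P) \<le> (\<integral>x. lsnorm s (Z x) powr q \<partial>P) powr (1/q)"
  proof -
    have p: "q > 1" "q / (q - 1) > 1" using q by auto
    have pq: "1 / q + 1 / (q / (q - 1)) = 1" using q by (simp add: field_simps)
    have "(\<integral>x. lsnorm s (Z x) * 1 \<partial>P) \<le> (\<integral>x. lsnorm s (Z x) powr q \<partial>P) powr (1/q) * (\<integral>x. 1 powr (q / (q - 1)) \<partial>P) powr (1 / (q / (q - 1)))"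
      by (rule holder_integral(2)[OF p pq]) (use Zi in \<open>auto simp: lsnorm_nonneg\<close>)
    then show ?thesis by (simp add: prob_space)
  qed
  show ?thesis using step1 step2 by (simp add: w_def)
qed

lemma lq_norm_nonneg_fun:
  assumes "\<And>x. f x \<ge> 0"
  shows "lq_norm M q f = (\<integral>x. f x powr q \<partial>M) powr (1/q)"
  using assms by (simp add: lq_norm_def)

lemma dk:
  fixes P :: "'x measure" and dg :: "real^'d \<Rightarrow> 'x \<Rightarrow> real^'d" and dG :: "real^'d \<Rightarrow> real^'d"
  assumes P: "prob_space P"
    and dg_meas: "(\<lambda>(b, x). dg b x) \<in> borel_measurable (borel \<Otimes>\<^sub>M P)"
    and dG_def: "\<And>b. dG b = (\<integral>x. dg b x \<partial>P)"
    and q: "q \<ge> 2" and s: "s \<ge> 2" "even s"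
    and mu: "\<mu> > 0"
    and A2: "\<And>b b'. odot_pow (b - b') (s - 1) \<bullet> (dG b - dG b') \<ge> \<mu> * lsnorm s (b - b') ^ s"
    and dGstar: "dG bstar = 0"
    and A3_M: "integrable P (\<lambda>x. \<bar>lsnorm s (dg bstar x)\<bar> powr q)"
    and L: "L > 0"
    and A3_L_int: "\<And>b b'. integrable P (\<lambda>x. \<bar>lsnorm s (dg b x - dg b' x)\<bar> powr q)"
    and A3_L: "\<And>b b'. lq_norm P q (\<lambda>x. lsnorm s (dg b x - dg b' x)) \<le> L * lsnorm s (b - b')"
    and alpha: "\<alpha> > 0"
  shows "integrable P (\<lambda>x. lsnorm s (\<beta> - \<alpha> *\<^sub>R dg \<beta> x - bstar) powr q)"
    and "(\<integral>x. lsnorm s (\<beta> - \<alpha> *\<^sub>R dg \<beta> x - bstar) powr q \<partial>P) powr (2/q)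
       \<le> (1 - 2 * \<alpha> * \<mu> + 7 * max q (real s) * \<alpha>\<^sup>2 * L\<^sup>2) * lsnorm s (\<beta> - bstar) ^ 2
         + 3 * max q (real s) * \<alpha>\<^sup>2 * (lq_norm P q (\<lambda>x. lsnorm s (dg bstar x)))\<^sup>2"
proof -
  interpret prob_space P by (rule P)
  have s0: "s > 0" using s by simp
  have q0: "q > 0" using q by simp
  have dgm[measurable]: "(\<lambda>x. dg b x) \<in> borel_measurable P" for b
  proof -
    have "(\<lambda>x. (b, x)) \<in> P \<rightarrow>\<^sub>M borel \<Otimes>\<^sub>M P" by measurable
    from measurable_compose[OF this dg_meas] show ?thesis by simp
  qed
  define m where "m = max q (real s)"
  define x where "x = \<beta> - bstar"
  define V where "V = (\<lambda>\<xi>. dg \<beta> \<xi>)"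
  define W where "W = (\<lambda>\<xi>. dg bstar \<xi>)"
  define Z where "Z = (\<lambda>\<xi>. V \<xi> - W \<xi>)"
  define g0 where "g0 = dG \<beta>"
  define Mq where "Mq = lq_norm P q (\<lambda>x. lsnorm s (dg bstar x))"
  have [measurable]: "V \<in> borel_measurable P" "W \<in> borel_measurable P" "Z \<in> borel_measurable P"
    unfolding V_def W_def Z_def by measurable
  have Wi: "integrable P (\<lambda>\<xi>. lsnorm s (W \<xi>) powr q)"
    using A3_M by (simp add: W_def lsnorm_nonneg)
  have Zi: "integrable P (\<lambda>\<xi>. lsnorm s (Z \<xi>) powr q)"
    using A3_L_int[of \<beta> bstar] by (simp add: Z_def V_def W_def lsnorm_nonneg)
  have VZW: "V \<xi> = Z \<xi> + W \<xi>" for \<xi> by (simp add: Z_def)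
  have Vi: "integrable P (\<lambda>\<xi>. lsnorm s (V \<xi>) powr q)"
  proof (rule Bochner_Integration.integrable_bound)
    show "integrable P (\<lambda>\<xi>. (lsnorm s (Z \<xi>) + lsnorm s (W \<xi>)) powr q)"
      by (rule integrable_powr_sum[OF _ _ _ _ _ Zi Wi]) (use q in \<open>auto simp: lsnorm_nonneg\<close>)
    show "AE \<xi> in P. norm (lsnorm s (V \<xi>) powr q) \<le> norm ((lsnorm s (Z \<xi>) + lsnorm s (W \<xi>)) powr q)"
    proof (intro AE_I2)
      fix \<xi>
      have "lsnorm s (V \<xi>) \<le> lsnorm s (Z \<xi>) + lsnorm s (W \<xi>)" unfolding VZW by (rule lsnorm_triangle[OF s(1)])
      then show "norm (lsnorm s (V \<xi>) powr q) \<le> norm ((lsnorm s (Z \<xi>) + lsnorm s (W \<xi>)) powr q)"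
        using q by (auto simp: lsnorm_nonneg intro!: powr_mono2)
    qed
  qed measurable
  have VI: "integrable P V" by (rule vec_integrable_lq[OF P s(1) _ _ Vi]) (use q in auto)
  have WI: "integrable P W" by (rule vec_integrable_lq[OF P s(1) _ _ Wi]) (use q in auto)
  have ZI: "integrable P Z" by (rule vec_integrable_lq[OF P s(1) _ _ Zi]) (use q in auto)
  have EV: "(\<integral>\<xi>. V \<xi> \<partial>P) = g0" by (simp add: V_def g0_def dG_def)
  have EW: "(\<integral>\<xi>. W \<xi> \<partial>P) = 0" using dGstar by (simp add: W_def dG_def)
  have EZ: "(\<integral>\<xi>. Z \<xi> \<partial>P) = g0" unfolding Z_def using EV EW VI WI by simp
  have NZ: "(\<integral>\<xi>. lsnorm s (Z \<xi>) powr q \<partial>P) powr (1/q) \<le> L * lsnorm s x"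
    using A3_L[of \<beta> bstar] by (simp add: lq_norm_def Z_def V_def W_def x_def lsnorm_nonneg)
  have NW: "(\<integral>\<xi>. lsnorm s (W \<xi>) powr q \<partial>P) powr (1/q) = Mq"
    by (simp add: lq_norm_def Mq_def W_def lsnorm_nonneg)
  have Mq0: "Mq \<ge> 0" by (simp add: Mq_def lq_norm_def)
  have Ng0: "lsnorm s g0 \<le> L * lsnorm s x"
    using jensen_vec[OF P s q _ Zi] NZ EZ by simp
  define b where "b = x - \<alpha> *\<^sub>R g0"
  define U where "U = (\<lambda>\<xi>. - \<alpha> *\<^sub>R (V \<xi> - g0))"
  have [measurable]: "U \<in> borel_measurable P" unfolding U_def by measurable
  have bU: "\<beta> - \<alpha> *\<^sub>R dg \<beta> \<xi> - bstar = b + U \<xi>" for \<xi>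
    by (simp add: b_def U_def x_def V_def algebra_simps)
  have NU: "lsnorm s (U \<xi>) \<le> \<alpha> * (lsnorm s (Z \<xi>) + lsnorm s (W \<xi>) + lsnorm s g0)" for \<xi>
  proof -
    have "lsnorm s (U \<xi>) = \<alpha> * lsnorm s (V \<xi> - g0)"
      using alpha s0 by (simp add: U_def lsnorm_scale lsnorm_minus)
    also have "lsnorm s (V \<xi> - g0) \<le> lsnorm s (Z \<xi> + W \<xi>) + lsnorm s (- g0)"
      using lsnorm_triangle[OF s(1), of "Z \<xi> + W \<xi>" "- g0"] by (simp add: VZW)
    also have "\<dots> \<le> lsnorm s (Z \<xi>) + lsnorm s (W \<xi>) + lsnorm s g0"
      using lsnorm_triangle[OF s(1), of "Z \<xi>" "W \<xi>"] lsnorm_minus[OF s0, of g0] by simp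
    finally show ?thesis using alpha by (simp add: mult_left_mono)
  qed
  define Y where "Y = (\<lambda>\<xi>. lsnorm s (Z \<xi>) + lsnorm s (W \<xi>))"
  have Y0: "Y \<xi> \<ge> 0" for \<xi> by (simp add: Y_def lsnorm_nonneg)
  have Ym[measurable]: "Y \<in> borel_measurable P" unfolding Y_def by measurable
  have Yi: "integrable P (\<lambda>\<xi>. Y \<xi> powr q)" unfolding Y_def
    by (rule integrable_powr_sum[OF _ _ _ _ _ Zi Wi]) (use q in \<open>auto simp: lsnorm_nonneg\<close>)
  have ci: "integrable P (\<lambda>\<xi>. (c::real) powr q)" for c by simp
  have Ui: "integrable P (\<lambda>\<xi>. lsnorm s (U \<xi>) powr q)"
  proof (rule Bochner_Integration.integrable_bound)
    show "integrable P (\<lambda>\<xi>. (\<alpha> * (Y \<xi> + lsnorm s g0)) powr q)"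
      using integrable_powr_sum[OF _ _ Y0 _ _ Yi ci[of "lsnorm s g0"]] q alpha
      by (simp add: powr_mult lsnorm_nonneg Y0 add_nonneg_nonneg)
    show "AE \<xi> in P. norm (lsnorm s (U \<xi>) powr q) \<le> norm ((\<alpha> * (Y \<xi> + lsnorm s g0)) powr q)"
      using NU q alpha by (auto simp: Y_def lsnorm_nonneg add.assoc intro!: powr_mono2)
  qed (simp add: Y_def)
  have U0: "(\<integral>\<xi>. U \<xi> $ i \<partial>P) = 0" for i
  proof -
    have "(\<integral>\<xi>. U \<xi> $ i \<partial>P) = (\<integral>\<xi>. U \<xi> \<partial>P) $ i"
      by (rule integral_bounded_linear[OF bounded_linear_vec_nth vec_integrable_lq[OF P s(1) _ _ Ui]]) (use q in auto)
    also have "(\<integral>\<xi>. U \<xi> \<partial>P) = - \<alpha> *\<^sub>R ((\<integral>\<xi>. V \<xi> \<partial>P) - g0)"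
      unfolding U_def using VI by (simp add: prob_space)
    also have "\<dots> = 0" by (simp add: EV)
    finally show ?thesis by simp
  qed
  have Ubound: "(\<integral>\<xi>. lsnorm s (U \<xi>) powr q \<partial>P) powr (1/q) \<le> \<alpha> * (2 * L * lsnorm s x + Mq)"
  proof -
    define c where "c = lsnorm s g0"
    have c0: "c \<ge> 0" by (simp add: c_def lsnorm_nonneg)
    have Yci: "integrable P (\<lambda>\<xi>. (Y \<xi> + c) powr q)"
      using integrable_powr_sum[OF _ _ Y0 _ _ Yi ci[of c]] q c0 by simp
    have "(\<integral>\<xi>. lsnorm s (U \<xi>) powr q \<partial>P) \<le> (\<integral>\<xi>. \<alpha> powr q * (Y \<xi> + c) powr q \<partial>P)"
    proof (rule integral_mono[OF Ui])
      show "integrable P (\<lambda>\<xi>. \<alpha> powr q * (Y \<xi> + c) powr q)" using Yci by simp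
      fix \<xi>
      have "lsnorm s (U \<xi>) powr q \<le> (\<alpha> * (Y \<xi> + c)) powr q"
        using NU[of \<xi>] q by (intro powr_mono2) (auto simp: Y_def c_def lsnorm_nonneg add.assoc)
      also have "\<dots> = \<alpha> powr q * (Y \<xi> + c) powr q" using alpha Y0[of \<xi>] c0 by (simp add: powr_mult)
      finally show "lsnorm s (U \<xi>) powr q \<le> \<alpha> powr q * (Y \<xi> + c) powr q" .
    qed
    then have "(\<integral>\<xi>. lsnorm s (U \<xi>) powr q \<partial>P) powr (1/q) \<le> (\<alpha> powr q * (\<integral>\<xi>. (Y \<xi> + c) powr q \<partial>P)) powr (1/q)"
      using q by (intro powr_mono2) (auto intro!: integral_nonneg_AE)
    also have "\<dots> = \<alpha> * (\<integral>\<xi>. (Y \<xi> + c) powr q \<partial>P) powr (1/q)"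
    proof -
      have "(\<integral>\<xi>. (Y \<xi> + c) powr q \<partial>P) \<ge> 0" by (intro integral_nonneg_AE) auto
      then show ?thesis using alpha q0 by (simp add: powr_mult powr_powr)
    qed
    also have "(\<integral>\<xi>. (Y \<xi> + c) powr q \<partial>P) powr (1/q) \<le> (\<integral>\<xi>. Y \<xi> powr q \<partial>P) powr (1/q) + (\<integral>\<xi>. c powr q \<partial>P) powr (1/q)"
      by (rule minkowski_integral) (use q Y0 c0 Yi ci in auto)
    also have "(\<integral>\<xi>. c powr q \<partial>P) powr (1/q) = c" using c0 q0 by (simp add: prob_space powr_powr)
    also have "(\<integral>\<xi>. Y \<xi> powr q \<partial>P) powr (1/q) \<le> (\<integral>\<xi>. lsnorm s (Z \<xi>) powr q \<partial>P) powr (1/q) + (\<integral>\<xi>. lsnorm s (W \<xi>) powr q \<partial>P) powr (1/q)"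
      unfolding Y_def by (rule minkowski_integral) (use q Zi Wi in \<open>auto simp: lsnorm_nonneg\<close>)
    finally have "(\<integral>\<xi>. lsnorm s (U \<xi>) powr q \<partial>P) powr (1/q) \<le> \<alpha> * ((\<integral>\<xi>. lsnorm s (Z \<xi>) powr q \<partial>P) powr (1/q) + (\<integral>\<xi>. lsnorm s (W \<xi>) powr q \<partial>P) powr (1/q) + c)"
      using alpha by (simp add: mult_left_mono)
    also have "\<dots> \<le> \<alpha> * (L * lsnorm s x + Mq + L * lsnorm s x)"
      using NZ NW Ng0 alpha by (intro mult_left_mono add_mono) (auto simp: c_def)
    finally show ?thesis by (simp add: algebra_simps)
  qed
  have rio': "(\<integral>\<xi>. lsnorm s (b + U \<xi>) powr q \<partial>P) powr (2/q) \<le> lsnorm s b ^ 2 + (m - 1) * (\<integral>\<xi>. lsnorm s (U \<xi>) powr q \<partial>P) powr (2/q)"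
    unfolding m_def by (rule rio[OF P s q _ Ui U0]) measurable
  show "integrable P (\<lambda>x. lsnorm s (\<beta> - \<alpha> *\<^sub>R dg \<beta> x - bstar) powr q)"
    unfolding bU using int_line[OF P s q _ Ui, of b 1] by simp
  show "(\<integral>x. lsnorm s (\<beta> - \<alpha> *\<^sub>R dg \<beta> x - bstar) powr q \<partial>P) powr (2/q)
       \<le> (1 - 2 * \<alpha> * \<mu> + 7 * max q (real s) * \<alpha>\<^sup>2 * L\<^sup>2) * lsnorm s (\<beta> - bstar) ^ 2
         + 3 * max q (real s) * \<alpha>\<^sup>2 * (lq_norm P q (\<lambda>x. lsnorm s (dg bstar x)))\<^sup>2"
  proof -
    define Nx where "Nx = lsnorm s x"
    have Nx0: "Nx \<ge> 0" by (simp add: Nx_def lsnorm_nonneg)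
    have m: "m \<ge> real s" "m \<ge> 2" using q by (auto simp: m_def)
    have IU: "(\<integral>\<xi>. lsnorm s (U \<xi>) powr q \<partial>P) powr (2/q) \<le> \<alpha>\<^sup>2 * (6 * L\<^sup>2 * Nx\<^sup>2 + 3 * Mq\<^sup>2)"
    proof -
      define J where "J = (\<integral>\<xi>. lsnorm s (U \<xi>) powr q \<partial>P)"
      have J0: "J \<ge> 0" unfolding J_def by (intro integral_nonneg_AE) auto
      have "J powr (2/q) = (J powr (1/q))\<^sup>2"
      proof -
        have "(J powr (1/q))\<^sup>2 = (J powr (1/q)) powr 2" by (rule powr_nat_nonneg[of 2, simplified, symmetric]) simp
        also have "\<dots> = J powr (2/q)" by (simp add: powr_powr)
        finally show ?thesis by simp
      qed
      also have "\<dots> \<le> (\<alpha> * (2 * L * Nx + Mq))\<^sup>2"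
        using Ubound by (intro power_mono) (auto simp: J_def Nx_def)
      also have "\<dots> = \<alpha>\<^sup>2 * (2 * L * Nx + Mq)\<^sup>2" by (simp add: power_mult_distrib)
      also have "(2 * L * Nx + Mq)\<^sup>2 \<le> 6 * L\<^sup>2 * Nx\<^sup>2 + 3 * Mq\<^sup>2"
      proof -
        have "0 \<le> (L * Nx - Mq)\<^sup>2" by simp
        then show ?thesis by (simp add: power2_eq_square algebra_simps)
      qed
      finally show ?thesis unfolding J_def by (simp add: mult_left_mono)
    qed
    have Nb: "lsnorm s b ^ 2 \<le> Nx\<^sup>2 - 2 * \<alpha> * \<mu> * Nx\<^sup>2 + (real s - 1) * \<alpha>\<^sup>2 * L\<^sup>2 * Nx\<^sup>2"
    proof -
      have "lsnorm s b ^ 2 = lsnorm s (x + (- \<alpha>) *\<^sub>R g0) ^ 2" by (simp add: b_def)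
      also have "\<dots> \<le> lsnorm s x ^ 2 + fdir s 2 x ((- \<alpha>) *\<^sub>R g0) + (real s - 1) * lsnorm s ((- \<alpha>) *\<^sub>R g0) ^ 2"
        by (rule ls_smooth[OF s])
      also have "fdir s 2 x ((- \<alpha>) *\<^sub>R g0) = - \<alpha> * fdir s 2 x g0" by (rule fdir_scale)
      also have "lsnorm s ((- \<alpha>) *\<^sub>R g0) = \<alpha> * lsnorm s g0" using alpha s0 by (simp add: lsnorm_scale lsnorm_minus)
      finally have *: "lsnorm s b ^ 2 \<le> Nx\<^sup>2 - \<alpha> * fdir s 2 x g0 + (real s - 1) * (\<alpha> * lsnorm s g0)\<^sup>2"
        by (simp add: Nx_def)
      have f: "fdir s 2 x g0 \<ge> 2 * \<mu> * Nx\<^sup>2"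
      proof (cases "x = 0")
        case True then show ?thesis using s0 by (simp add: Nx_def fdir_def)
      next
        case False
        then have Nxp: "Nx > 0" using lsnorm_eq_0_iff[OF s0, of x] Nx0 by (simp add: Nx_def)
        have a2: "odot_pow x (s - 1) \<bullet> g0 \<ge> \<mu> * Nx ^ s"
          using A2[of \<beta> bstar] dGstar by (simp add: x_def g0_def Nx_def)
        have "2 * \<mu> * Nx\<^sup>2 = 2 * Nx powr (2 - real s) * (\<mu> * Nx ^ s)"
        proof -
          have "Nx powr (2 - real s) * Nx ^ s = Nx powr 2" using powr_mult_pow[OF Nxp, of s "2 - real s"] s0 by simp
          also have "\<dots> = Nx\<^sup>2" by (rule powr_nat_nonneg[of 2, simplified]) (use Nx0 in simp)
          finally show ?thesis by (simp add: algebra_simps)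
        qed
        also have "\<dots> \<le> 2 * Nx powr (2 - real s) * (odot_pow x (s - 1) \<bullet> g0)"
          using a2 by (intro mult_left_mono) auto
        also have "\<dots> = fdir s 2 x g0" by (simp add: fdir_def Nx_def)
        finally show ?thesis .
      qed
      have g: "(\<alpha> * lsnorm s g0)\<^sup>2 \<le> \<alpha>\<^sup>2 * L\<^sup>2 * Nx\<^sup>2"
      proof -
        have "\<alpha> * lsnorm s g0 \<le> \<alpha> * (L * Nx)" using Ng0 alpha by (simp add: Nx_def)
        then have "(\<alpha> * lsnorm s g0)\<^sup>2 \<le> (\<alpha> * (L * Nx))\<^sup>2"
          using alpha by (intro power_mono) (auto simp: lsnorm_nonneg)
        then show ?thesis by (simp add: power_mult_distrib)
      qed
      have "- \<alpha> * fdir s 2 x g0 \<le> - \<alpha> * (2 * \<mu> * Nx\<^sup>2)" using f alpha by simp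
      moreover have "(real s - 1) * (\<alpha> * lsnorm s g0)\<^sup>2 \<le> (real s - 1) * (\<alpha>\<^sup>2 * L\<^sup>2 * Nx\<^sup>2)"
        using g s by (intro mult_left_mono) auto
      ultimately show ?thesis using * by (simp add: algebra_simps)
    qed
    have "(\<integral>x. lsnorm s (\<beta> - \<alpha> *\<^sub>R dg \<beta> x - bstar) powr q \<partial>P) powr (2/q)
        = (\<integral>\<xi>. lsnorm s (b + U \<xi>) powr q \<partial>P) powr (2/q)" by (simp add: bU)
    also have "\<dots> \<le> lsnorm s b ^ 2 + (m - 1) * (\<integral>\<xi>. lsnorm s (U \<xi>) powr q \<partial>P) powr (2/q)" by (rule rio')
    also have "\<dots> \<le> (Nx\<^sup>2 - 2 * \<alpha> * \<mu> * Nx\<^sup>2 + (real s - 1) * \<alpha>\<^sup>2 * L\<^sup>2 * Nx\<^sup>2) + (m - 1) * (\<alpha>\<^sup>2 * (6 * L\<^sup>2 * Nx\<^sup>2 + 3 * Mq\<^sup>2))"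
      using Nb IU m by (intro add_mono mult_left_mono) auto
    also have "\<dots> \<le> (1 - 2 * \<alpha> * \<mu> + 7 * m * \<alpha>\<^sup>2 * L\<^sup>2) * Nx\<^sup>2 + 3 * m * \<alpha>\<^sup>2 * Mq\<^sup>2"
    proof -
      define K where "K = \<alpha>\<^sup>2 * L\<^sup>2 * Nx\<^sup>2"
      have K0: "K \<ge> 0" by (simp add: K_def)
      have "((real s - 1) + 6 * (m - 1)) * K \<le> (7 * m) * K" using m K0 by (intro mult_right_mono) auto
      moreover have "(m - 1) * (\<alpha>\<^sup>2 * Mq\<^sup>2) \<le> m * (\<alpha>\<^sup>2 * Mq\<^sup>2)" by (intro mult_right_mono) auto
      moreover have mq0: "0 \<le> Mq\<^sup>2 * \<alpha>\<^sup>2" by simp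
      ultimately show ?thesis
        apply (simp add: K_def algebra_simps)
        using mq0 by linarith
    qed
    finally show ?thesis by (simp add: m_def Nx_def x_def Mq_def)
  qed
qed

definition S :: "(real^'d \<Rightarrow> 'x \<Rightarrow> real^'d) \<Rightarrow> real \<Rightarrow> nat \<Rightarrow> real^'d \<Rightarrow> (nat \<Rightarrow> 'x) \<Rightarrow> real^'d" where
  "S dg \<alpha> k b t = sgd dg \<alpha> (\<lambda>i t. t i) (\<lambda>_. b) k t"

lemma S_0[simp]: "S dg \<alpha> 0 b t = b" by (simp add: S_def)
lemma S_Suc: "S dg \<alpha> (Suc k) b t = S dg \<alpha> k b t - \<alpha> *\<^sub>R dg (S dg \<alpha> k b t) (t (Suc k))"
  by (simp add: S_def)

lemma sgd_eq_S: "sgd dg \<alpha> \<xi> B0 k \<omega> = S dg \<alpha> k (B0 \<omega>) (\<lambda>i. \<xi> i \<omega>)"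
  by (induction k) (simp_all add: S_Suc)

lemma S_cong: "(\<And>i. 1 \<le> i \<Longrightarrow> i \<le> k \<Longrightarrow> t i = t' i) \<Longrightarrow> S dg \<alpha> k b t = S dg \<alpha> k b t'"
proof (induction k)
  case 0 then show ?case by simp
next
  case (Suc k)
  then have "S dg \<alpha> k b t = S dg \<alpha> k b t'" by auto
  moreover have "t (Suc k) = t' (Suc k)" using Suc.prems by auto
  ultimately show ?case by (simp add: S_Suc)
qed

lemma S_meas:
  fixes P :: "'x measure" and dg :: "real^'d \<Rightarrow> 'x \<Rightarrow> real^'d"
  assumes dg_meas: "(\<lambda>(b, x). dg b x) \<in> borel_measurable (borel \<Otimes>\<^sub>M P)"
    and I: "{1..k} \<subseteq> I"
  shows "(\<lambda>(b, t). S dg \<alpha> k b t) \<in> borel_measurable (borel \<Otimes>\<^sub>M PiM I (\<lambda>_. P))"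
  using I
proof (induction k)
  case 0 then show ?case by simp
next
  case (Suc k)
  have "{1..k} \<subseteq> I" using Suc.prems by auto
  then have IH: "(\<lambda>(b, t). S dg \<alpha> k b t) \<in> borel_measurable (borel \<Otimes>\<^sub>M PiM I (\<lambda>_. P))" by (rule Suc.IH)
  have kI: "Suc k \<in> I" using Suc.prems by auto
  have c: "(\<lambda>(b, t). t (Suc k)) \<in> (borel \<Otimes>\<^sub>M PiM I (\<lambda>_. P)) \<rightarrow>\<^sub>M P"
  proof -
    have "(\<lambda>t. t (Suc k)) \<in> PiM I (\<lambda>_. P) \<rightarrow>\<^sub>M P" using kI by (rule measurable_component_singleton)
    from measurable_compose[OF measurable_snd this] show ?thesis by (simp add: case_prod_beta')
  qed
  have pr: "(\<lambda>z. (case z of (b, t) \<Rightarrow> S dg \<alpha> k b t, case z of (b, t) \<Rightarrow> t (Suc k))) \<in> (borel \<Otimes>\<^sub>M PiM I (\<lambda>_. P)) \<rightarrow>\<^sub>M borel \<Otimes>\<^sub>M P"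
    by (rule measurable_Pair[OF IH c])
  have dgc: "(\<lambda>z. dg (case z of (b, t) \<Rightarrow> S dg \<alpha> k b t) (case z of (b, t) \<Rightarrow> t (Suc k))) \<in> borel_measurable (borel \<Otimes>\<^sub>M PiM I (\<lambda>_. P))"
    using measurable_compose[OF pr dg_meas] by simp
  have "(\<lambda>z. (case z of (b, t) \<Rightarrow> S dg \<alpha> k b t) - \<alpha> *\<^sub>R dg (case z of (b, t) \<Rightarrow> S dg \<alpha> k b t) (case z of (b, t) \<Rightarrow> t (Suc k)))
      \<in> borel_measurable (borel \<Otimes>\<^sub>M PiM I (\<lambda>_. P))"
    using IH dgc by measurable
  then show ?case by (simp add: S_Suc case_prod_beta')
qed

lemma indep_set_distr_pair:
  fixes X :: "'a \<Rightarrow> 'b" and Y :: "'a \<Rightarrow> 'c"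
  assumes Mp: "prob_space M" and X: "X \<in> M \<rightarrow>\<^sub>M SS" and Y: "Y \<in> M \<rightarrow>\<^sub>M TT"
    and ind: "prob_space.indep_set M {X -` A \<inter> space M | A. A \<in> sets SS} {Y -` A \<inter> space M | A. A \<in> sets TT}"
  shows "distr M SS X \<Otimes>\<^sub>M distr M TT Y = distr M (SS \<Otimes>\<^sub>M TT) (\<lambda>x. (X x, Y x))"
proof -
  interpret prob_space M by (rule Mp)
  have XY: "(\<lambda>x. (X x, Y x)) \<in> M \<rightarrow>\<^sub>M SS \<Otimes>\<^sub>M TT" by (rule measurable_Pair[OF X Y])
  interpret X: prob_space "distr M SS X" by (rule prob_space_distr) (rule X)
  interpret Y: prob_space "distr M TT Y" by (rule prob_space_distr) (rule Y)
  interpret XY: pair_prob_space "distr M SS X" "distr M TT Y" ..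
  show ?thesis
  proof (rule pair_measure_eqI)
    show "sigma_finite_measure (distr M SS X)" ..
    show "sigma_finite_measure (distr M TT Y)" ..
    fix A B assume A: "A \<in> sets (distr M SS X)" and B: "B \<in> sets (distr M TT Y)"
    have "emeasure (distr M (SS \<Otimes>\<^sub>M TT) (\<lambda>x. (X x, Y x))) (A \<times> B) = emeasure M ((\<lambda>x. (X x, Y x)) -` (A \<times> B) \<inter> space M)"
      using A B by (intro emeasure_distr[OF XY]) auto
    also have "(\<lambda>x. (X x, Y x)) -` (A \<times> B) \<inter> space M = (X -` A \<inter> space M) \<inter> (Y -` B \<inter> space M)" by auto
    also have "emeasure M ((X -` A \<inter> space M) \<inter> (Y -` B \<inter> space M)) = emeasure M (X -` A \<inter> space M) * emeasure M (Y -` B \<inter> space M)"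
    proof -
      have "prob ((X -` A \<inter> space M) \<inter> (Y -` B \<inter> space M)) = prob (X -` A \<inter> space M) * prob (Y -` B \<inter> space M)"
        by (rule indep_setD[OF ind]) (use A B in auto)
      then show ?thesis by (simp add: emeasure_eq_measure measure_nonneg ennreal_mult)
    qed
    also have "\<dots> = emeasure (distr M SS X) A * emeasure (distr M TT Y) B"
      using A B X Y by (simp add: emeasure_distr)
    finally show "emeasure (distr M SS X) A * emeasure (distr M TT Y) B = emeasure (distr M (SS \<Otimes>\<^sub>M TT) (\<lambda>x. (X x, Y x))) (A \<times> B)" by simp
  qed simp
qed

lemma nn_integral_indep:
  fixes X :: "'a \<Rightarrow> 'b" and Y :: "'a \<Rightarrow> 'c" and g :: "'b \<times> 'c \<Rightarrow> ennreal"
  assumes Mp: "prob_space M" and X[measurable]: "X \<in> M \<rightarrow>\<^sub>M SS" and Y[measurable]: "Y \<in> M \<rightarrow>\<^sub>M TT"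
    and ind: "prob_space.indep_set M {X -` A \<inter> space M | A. A \<in> sets SS} {Y -` A \<inter> space M | A. A \<in> sets TT}"
    and g[measurable]: "g \<in> borel_measurable (SS \<Otimes>\<^sub>M TT)"
  shows "(\<integral>\<^sup>+ \<omega>. g (X \<omega>, Y \<omega>) \<partial>M) = (\<integral>\<^sup>+ \<omega>. (\<integral>\<^sup>+ y. g (X \<omega>, y) \<partial>distr M TT Y) \<partial>M)"
proof -
  interpret prob_space M by (rule Mp)
  interpret Yd: prob_space "distr M TT Y" by (rule prob_space_distr) (rule Y)
  have gd: "g \<in> borel_measurable (distr M SS X \<Otimes>\<^sub>M distr M TT Y)"
    using g by (simp cong: measurable_cong_sets)
  have "(\<integral>\<^sup>+ \<omega>. g (X \<omega>, Y \<omega>) \<partial>M) = (\<integral>\<^sup>+ z. g z \<partial>distr M (SS \<Otimes>\<^sub>M TT) (\<lambda>\<omega>. (X \<omega>, Y \<omega>)))"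
    by (rule nn_integral_distr[symmetric]) measurable
  also have "\<dots> = (\<integral>\<^sup>+ z. g z \<partial>(distr M SS X \<Otimes>\<^sub>M distr M TT Y))"
    using indep_set_distr_pair[OF Mp X Y ind] by simp
  also have "\<dots> = (\<integral>\<^sup>+ x. (\<integral>\<^sup>+ y. g (x, y) \<partial>distr M TT Y) \<partial>distr M SS X)"
    by (rule Yd.nn_integral_fst[symmetric]) (rule gd)
  also have "\<dots> = (\<integral>\<^sup>+ \<omega>. (\<integral>\<^sup>+ y. g (X \<omega>, y) \<partial>distr M TT Y) \<partial>M)"
  proof -
    have mf: "(\<lambda>x. \<integral>\<^sup>+ y. g (x, y) \<partial>distr M TT Y) \<in> borel_measurable SS"
      using Yd.borel_measurable_nn_integral_fst[of g SS] g by (simp cong: measurable_cong_sets)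
    have mf': "(\<lambda>x. \<integral>\<^sup>+ y. g (x, y) \<partial>distr M TT Y) \<in> borel_measurable (distr M SS X)"
      using mf by (simp cong: measurable_cong_sets)
    show ?thesis by (rule nn_integral_distr[OF X mf'])
  qed
  finally show ?thesis .
qed

lemma (in prob_space) indep_set_mono:
  assumes "indep_set A B" "A' \<subseteq> A" "B' \<subseteq> B"
  shows "indep_set A' B'"
proof -
  have "indep_sets (case_bool A B) UNIV" using assms(1) unfolding indep_set_def .
  then have "indep_sets (case_bool A' B') UNIV"
  proof (rule indep_sets_mono_sets)
    fix i :: bool show "case_bool A' B' i \<subseteq> case_bool A B i" using assms by (cases i) simp_all
  qed
  then show ?thesis unfolding indep_set_def .
qed

lemma (in prob_space) indep_set_vimage_compose:
  assumes ind: "indep_var SS R1 TT R2"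
    and Y1: "Y1 \<in> SS \<rightarrow>\<^sub>M N1" and Y2: "Y2 \<in> TT \<rightarrow>\<^sub>M N2"
  shows "indep_set {(Y1 \<circ> R1) -` A \<inter> space M | A. A \<in> sets N1} {(Y2 \<circ> R2) -` A \<inter> space M | A. A \<in> sets N2}"
proof -
  have rv: "R1 \<in> M \<rightarrow>\<^sub>M SS" "R2 \<in> M \<rightarrow>\<^sub>M TT"
    using indep_var_rv1[OF ind] indep_var_rv2[OF ind] by auto
  have isd: "indep_set (sigma_sets (space M) {R1 -` A \<inter> space M | A. A \<in> sets SS}) (sigma_sets (space M) {R2 -` A \<inter> space M | A. A \<in> sets TT})"
    using indep_var_eq[THEN iffD1, OF ind] by (rule conjunct2)
  show ?thesis
  proof (rule indep_set_mono[OF isd])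
    show "{(Y1 \<circ> R1) -` A \<inter> space M | A. A \<in> sets N1} \<subseteq> sigma_sets (space M) {R1 -` A \<inter> space M | A. A \<in> sets SS}"
    proof
      fix E assume "E \<in> {(Y1 \<circ> R1) -` A \<inter> space M | A. A \<in> sets N1}"
      then obtain A where A: "A \<in> sets N1" "E = (Y1 \<circ> R1) -` A \<inter> space M" by auto
      have sp: "\<And>\<omega>. \<omega> \<in> space M \<Longrightarrow> R1 \<omega> \<in> space SS" using rv(1) by (rule measurable_space)
      have Eeq: "E = R1 -` (Y1 -` A \<inter> space SS) \<inter> space M" unfolding A(2) using sp by auto
      have mem: "Y1 -` A \<inter> space SS \<in> sets SS" using Y1 A(1) by (rule measurable_sets)
      show "E \<in> sigma_sets (space M) {R1 -` A \<inter> space M | A. A \<in> sets SS}"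
        unfolding Eeq by (rule sigma_sets.Basic) (use mem in blast)
    qed
    show "{(Y2 \<circ> R2) -` A \<inter> space M | A. A \<in> sets N2} \<subseteq> sigma_sets (space M) {R2 -` A \<inter> space M | A. A \<in> sets TT}"
    proof
      fix E assume "E \<in> {(Y2 \<circ> R2) -` A \<inter> space M | A. A \<in> sets N2}"
      then obtain A where A: "A \<in> sets N2" "E = (Y2 \<circ> R2) -` A \<inter> space M" by auto
      have sp: "\<And>\<omega>. \<omega> \<in> space M \<Longrightarrow> R2 \<omega> \<in> space TT" using rv(2) by (rule measurable_space)
      have Eeq: "E = R2 -` (Y2 -` A \<inter> space TT) \<inter> space M" unfolding A(2) using sp by auto
      have mem: "Y2 -` A \<inter> space TT \<in> sets TT" using Y2 A(1) by (rule measurable_sets)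
      show "E \<in> sigma_sets (space M) {R2 -` A \<inter> space M | A. A \<in> sets TT}"
        unfolding Eeq by (rule sigma_sets.Basic) (use mem in blast)
    qed
  qed
qed

lemma step_identity:
  fixes M :: "'a measure" and P :: "'x measure" and \<xi> :: "nat \<Rightarrow> 'a \<Rightarrow> 'x"
    and dg :: "real^'d \<Rightarrow> 'x \<Rightarrow> real^'d" and f :: "real^'d \<Rightarrow> ennreal"
  assumes M: "prob_space M" and P: "prob_space P"
    and xi_indep: "prob_space.indep_vars M (\<lambda>_. P) \<xi> {1..}"
    and xi_law: "\<And>k. k \<ge> 1 \<Longrightarrow> distr M P (\<xi> k) = P"
    and dg_meas: "(\<lambda>(b, x). dg b x) \<in> borel_measurable (borel \<Otimes>\<^sub>M P)"
    and f[measurable]: "f \<in> borel_measurable borel"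
  shows "(\<integral>\<^sup>+ \<omega>. f (sgd dg \<alpha> \<xi> (\<lambda>_. b) (Suc j) \<omega>) \<partial>M)
       = (\<integral>\<^sup>+ \<omega>. (\<integral>\<^sup>+ x. f (sgd dg \<alpha> \<xi> (\<lambda>_. b) j \<omega> - \<alpha> *\<^sub>R dg (sgd dg \<alpha> \<xi> (\<lambda>_. b) j \<omega>) x) \<partial>P) \<partial>M)"
proof -
  interpret prob_space M by (rule M)
  interpret P: prob_space P by (rule P)
  define X where "X = (\<lambda>\<omega>. sgd dg \<alpha> \<xi> (\<lambda>_. b) j \<omega>)"
  define R1 where "R1 = (\<lambda>\<omega>. restrict (\<lambda>i. \<xi> i \<omega>) {1..j})"
  define R2 where "R2 = (\<lambda>\<omega>. restrict (\<lambda>i. \<xi> i \<omega>) {Suc j})"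
  define Y1 where "Y1 = (\<lambda>t. S dg \<alpha> j b t)"
  define Y2 where "Y2 = (\<lambda>t::nat \<Rightarrow> 'x. t (Suc j))"
  have X_eq: "X = Y1 \<circ> R1"
    by (auto simp: X_def Y1_def R1_def fun_eq_iff sgd_eq_S intro!: S_cong)
  have xi_eq: "\<xi> (Suc j) = Y2 \<circ> R2"
    by (auto simp: fun_eq_iff Y2_def R2_def)
  have ind0: "indep_var (PiM {1..j} (\<lambda>_. P)) R1 (PiM {Suc j} (\<lambda>_. P)) R2"
    unfolding R1_def R2_def by (rule indep_var_restrict[OF xi_indep]) auto
  have Y1m: "Y1 \<in> PiM {1..j} (\<lambda>_. P) \<rightarrow>\<^sub>M borel"
  proof -
    have "(\<lambda>t. (b, t)) \<in> PiM {1..j} (\<lambda>_. P) \<rightarrow>\<^sub>M borel \<Otimes>\<^sub>M PiM {1..j} (\<lambda>_. P)" by measurable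
    from measurable_compose[OF this S_meas[OF dg_meas, of j "{1..j}" \<alpha>]] show ?thesis by (simp add: Y1_def)
  qed
  have Y2m: "Y2 \<in> PiM {Suc j} (\<lambda>_. P) \<rightarrow>\<^sub>M P"
    unfolding Y2_def by (rule measurable_component_singleton) simp
  have R1m: "R1 \<in> M \<rightarrow>\<^sub>M PiM {1..j} (\<lambda>_. P)" and R2m: "R2 \<in> M \<rightarrow>\<^sub>M PiM {Suc j} (\<lambda>_. P)"
    using indep_var_rv1[OF ind0] indep_var_rv2[OF ind0] by auto
  have Xm[measurable]: "X \<in> M \<rightarrow>\<^sub>M borel" unfolding X_eq by (rule measurable_comp[OF R1m Y1m])
  have xim[measurable]: "\<xi> (Suc j) \<in> M \<rightarrow>\<^sub>M P" unfolding xi_eq by (rule measurable_comp[OF R2m Y2m])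
  have ind: "indep_set {X -` A \<inter> space M | A. A \<in> sets borel} {\<xi> (Suc j) -` A \<inter> space M | A. A \<in> sets P}"
    unfolding X_eq xi_eq by (rule indep_set_vimage_compose[OF ind0 Y1m Y2m])
  have law: "distr M P (\<xi> (Suc j)) = P" using xi_law[of "Suc j"] by simp
  define G where "G = (\<lambda>z. f (fst z - \<alpha> *\<^sub>R dg (fst z) (snd z)))"
  have dgm[measurable]: "(\<lambda>z. dg (fst z) (snd z)) \<in> borel_measurable (borel \<Otimes>\<^sub>M P)"
    using dg_meas by (simp add: case_prod_beta')
  have Gm[measurable]: "G \<in> borel_measurable (borel \<Otimes>\<^sub>M P)" unfolding G_def by measurable
  have "(\<integral>\<^sup>+ \<omega>. f (sgd dg \<alpha> \<xi> (\<lambda>_. b) (Suc j) \<omega>) \<partial>M) = (\<integral>\<^sup>+ \<omega>. G (X \<omega>, \<xi> (Suc j) \<omega>) \<partial>M)"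
    by (simp add: G_def X_def)
  also have "\<dots> = (\<integral>\<^sup>+ \<omega>. (\<integral>\<^sup>+ y. G (X \<omega>, y) \<partial>distr M P (\<xi> (Suc j))) \<partial>M)"
    by (rule nn_integral_indep[OF M Xm xim ind Gm])
  finally show ?thesis by (simp add: law G_def X_def)
qed

lemma chain_step:
  fixes M :: "'a measure" and Y Z :: "'a \<Rightarrow> real"
  assumes Mp: "prob_space M" and c: "c \<ge> 0" and K: "K \<ge> 0" and q: "q \<ge> 2"
    and Ym[measurable]: "Y \<in> borel_measurable M" and Zm[measurable]: "Z \<in> borel_measurable M"
    and Y0: "\<And>x. Y x \<ge> 0" and Z0: "\<And>x. Z x \<ge> 0"
    and Yi: "integrable M (\<lambda>x. Y x powr q)"
    and le: "(\<integral>\<^sup>+ x. ennreal (Z x powr q) \<partial>M) \<le> (\<integral>\<^sup>+ x. ennreal ((c * (Y x)\<^sup>2 + K) powr (q / 2)) \<partial>M)"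
  shows "integrable M (\<lambda>x. Z x powr q)"
    and "(\<integral>x. Z x powr q \<partial>M) powr (2/q) \<le> c * (\<integral>x. Y x powr q \<partial>M) powr (2/q) + K"
proof -
  interpret prob_space M by (rule Mp)
  define p where "p = q / 2"
  have p: "p \<ge> 1" using q by (simp add: p_def)
  have Y2: "(c * (Y x)\<^sup>2) powr p = c powr p * Y x powr q" for x
  proof -
    have "(Y x)\<^sup>2 = Y x powr 2" using Y0[of x] by (rule powr_nat_nonneg[of 2, simplified, symmetric])
    then have "(c * (Y x)\<^sup>2) powr p = c powr p * (Y x powr 2) powr p" using c Y0[of x] by (simp add: powr_mult)
    also have "(Y x powr 2) powr p = Y x powr q" by (simp add: powr_powr p_def)
    finally show ?thesis .
  qed
  have f1i: "integrable M (\<lambda>x. (c * (Y x)\<^sup>2) powr p)" using Yi by (simp add: Y2)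
  have f2i: "integrable M (\<lambda>x. K powr p)" by simp
  have Ri: "integrable M (\<lambda>x. (c * (Y x)\<^sup>2 + K) powr p)"
    by (rule integrable_powr_sum[OF _ _ _ _ _ f1i f2i]) (use c K p in auto)
  have R0: "(c * (Y x)\<^sup>2 + K) powr p \<ge> 0" for x by simp
  have Req: "(\<integral>\<^sup>+ x. ennreal ((c * (Y x)\<^sup>2 + K) powr (q / 2)) \<partial>M) = ennreal (\<integral>x. (c * (Y x)\<^sup>2 + K) powr p \<partial>M)"
    using nn_integral_eq_integral[OF Ri] by (simp add: p_def)
  have fin: "(\<integral>\<^sup>+ x. ennreal (Z x powr q) \<partial>M) < \<infinity>" using le Req by (simp add: order.strict_trans1)
  show Zi: "integrable M (\<lambda>x. Z x powr q)" by (rule integrableI_nonneg) (use fin in auto)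
  have "ennreal (\<integral>x. Z x powr q \<partial>M) \<le> ennreal (\<integral>x. (c * (Y x)\<^sup>2 + K) powr p \<partial>M)"
    using le Req nn_integral_eq_integral[OF Zi] by simp
  then have I1: "(\<integral>x. Z x powr q \<partial>M) \<le> (\<integral>x. (c * (Y x)\<^sup>2 + K) powr p \<partial>M)"
    by (subst (asm) ennreal_le_iff) (auto intro!: integral_nonneg_AE)
  have "(\<integral>x. Z x powr q \<partial>M) powr (2/q) \<le> (\<integral>x. (c * (Y x)\<^sup>2 + K) powr p \<partial>M) powr (1/p)"
    using I1 q by (simp add: p_def) (intro powr_mono2, auto intro!: integral_nonneg_AE)
  also have "\<dots> \<le> (\<integral>x. (c * (Y x)\<^sup>2) powr p \<partial>M) powr (1/p) + (\<integral>x. K powr p \<partial>M) powr (1/p)"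
    by (rule minkowski_integral[OF p]) (use c K f1i f2i in auto)
  also have "(\<integral>x. K powr p \<partial>M) powr (1/p) = K" using K p by (simp add: prob_space powr_powr)
  also have "(\<integral>x. (c * (Y x)\<^sup>2) powr p \<partial>M) powr (1/p) = c * (\<integral>x. Y x powr q \<partial>M) powr (2/q)"
  proof -
    define I where "I = (\<integral>x. Y x powr q \<partial>M)"
    have e: "(\<integral>x. (c * (Y x)\<^sup>2) powr p \<partial>M) = c powr p * I" by (simp add: Y2 I_def)
    have I0: "I \<ge> 0" unfolding I_def by (intro integral_nonneg_AE) auto
    have "(c powr p * I) powr (1/p) = c * I powr (1/p)" using c p I0 by (simp add: powr_mult powr_powr)
    moreover have "1/p = 2/q" by (simp add: p_def)
    ultimately show ?thesis unfolding e I_def by simp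
  qed
  finally show "(\<integral>x. Z x powr q \<partial>M) powr (2/q) \<le> c * (\<integral>x. Y x powr q \<partial>M) powr (2/q) + K" .
qed

lemma lq_sq:
  assumes "\<And>x. f x \<ge> 0"
  shows "(lq_norm M q f)\<^sup>2 = (\<integral>x. f x powr q \<partial>M) powr (2/q)"
proof -
  define I where "I = (\<integral>x. f x powr q \<partial>M)"
  have "lq_norm M q f = I powr (1/q)" using assms by (simp add: lq_norm_def I_def)
  moreover have "(I powr (1/q))\<^sup>2 = I powr (2/q)"
  proof -
    have "(I powr (1/q))\<^sup>2 = (I powr (1/q)) powr 2" by (rule powr_nat_nonneg[of 2, simplified, symmetric]) simp
    also have "\<dots> = I powr (2/q)" by (simp add: powr_powr)
    finally show ?thesis .
  qed
  ultimately show ?thesis by (simp add: I_def)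
qed

lemma sgd_chain:
  fixes M :: "'a measure" and X :: "nat \<Rightarrow> 'a \<Rightarrow> real^'d" and \<Phi> :: "real^'d \<Rightarrow> real"
  assumes Mp: "prob_space M" and c: "c \<ge> 0" and K: "K \<ge> 0" and q: "q \<ge> 2"
    and Xm: "\<And>j. X j \<in> borel_measurable M"
    and \<Phi>0: "\<And>\<beta>. \<Phi> \<beta> \<ge> 0"
    and \<Phi>le: "\<And>\<beta>. \<Phi> \<beta> \<le> (c * (lsnorm s (\<beta> - bstar))\<^sup>2 + K) powr (q / 2)"
    and ident: "\<And>j. (\<integral>\<^sup>+ \<omega>. ennreal (lsnorm s (X (Suc j) \<omega> - bstar) powr q) \<partial>M) = (\<integral>\<^sup>+ \<omega>. ennreal (\<Phi> (X j \<omega>)) \<partial>M)"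
    and base: "integrable M (\<lambda>\<omega>. lsnorm s (X 0 \<omega> - bstar) powr q)"
  shows "\<forall>k \<ge> 1. (lq_norm M q (\<lambda>\<omega>. lsnorm s (X k \<omega> - bstar)))\<^sup>2
            \<le> c * (lq_norm M q (\<lambda>\<omega>. lsnorm s (X (k - 1) \<omega> - bstar)))\<^sup>2 + K"
proof -
  have Nm[measurable]: "(\<lambda>\<omega>. lsnorm s (X j \<omega> - bstar)) \<in> borel_measurable M" for j
    using Xm[of j] by measurable
  have le: "(\<integral>\<^sup>+ \<omega>. ennreal (lsnorm s (X (Suc j) \<omega> - bstar) powr q) \<partial>M)
      \<le> (\<integral>\<^sup>+ \<omega>. ennreal ((c * (lsnorm s (X j \<omega> - bstar))\<^sup>2 + K) powr (q / 2)) \<partial>M)" for j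
    unfolding ident by (intro nn_integral_mono ennreal_leI \<Phi>le)
  note CS = chain_step[OF Mp c K q Nm Nm lsnorm_nonneg lsnorm_nonneg]
  have int: "integrable M (\<lambda>\<omega>. lsnorm s (X j \<omega> - bstar) powr q)" for j
  proof (induction j)
    case 0 show ?case by (rule base)
  next
    case (Suc j) show ?case by (rule CS(1)[OF Suc.IH le])
  qed
  show ?thesis
  proof (intro allI impI)
    fix k :: nat assume "k \<ge> 1"
    then obtain j where k: "k = Suc j" by (cases k) auto
    have "(\<integral>x. lsnorm s (X (Suc j) x - bstar) powr q \<partial>M) powr (2/q) \<le> c * (\<integral>x. lsnorm s (X j x - bstar) powr q \<partial>M) powr (2/q) + K"
      by (rule CS(2)[OF int le])
    then show "(lq_norm M q (\<lambda>\<omega>. lsnorm s (X k \<omega> - bstar)))\<^sup>2 \<le> c * (lq_norm M q (\<lambda>\<omega>. lsnorm s (X (k - 1) \<omega> - bstar)))\<^sup>2 + K"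
      by (simp add: k lq_sq lsnorm_nonneg)
  qed
qed

lemma b0c_decomp:
  fixes M :: "'a measure" and P :: "'x measure" and \<xi> :: "nat \<Rightarrow> 'a \<Rightarrow> 'x"
    and dg :: "real^'d \<Rightarrow> 'x \<Rightarrow> real^'d" and f :: "real^'d \<Rightarrow> ennreal" and b0c :: "'a \<Rightarrow> real^'d"
  assumes Mp: "prob_space M"
    and b0c[measurable]: "b0c \<in> borel_measurable M"
    and Xi[measurable]: "(\<lambda>\<omega>. \<lambda>k\<in>{1..}. \<xi> k \<omega>) \<in> M \<rightarrow>\<^sub>M PiM {1..} (\<lambda>_. P)"
    and ind: "prob_space.indep_set M {b0c -` A \<inter> space M | A. A \<in> sets borel}
             {(\<lambda>\<omega>. \<lambda>k\<in>{1..}. \<xi> k \<omega>) -` A \<inter> space M | A. A \<in> sets (\<Pi>\<^sub>M k\<in>{1..}. P)}"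
    and dg_meas: "(\<lambda>(b, x). dg b x) \<in> borel_measurable (borel \<Otimes>\<^sub>M P)"
    and f[measurable]: "f \<in> borel_measurable borel"
  shows "(\<integral>\<^sup>+ \<omega>. f (sgd dg \<alpha> \<xi> b0c k \<omega>) \<partial>M) = (\<integral>\<^sup>+ \<omega>'. (\<integral>\<^sup>+ \<omega>. f (sgd dg \<alpha> \<xi> (\<lambda>_. b0c \<omega>') k \<omega>) \<partial>M) \<partial>M)"
proof -
  define Xi where "Xi = (\<lambda>\<omega>. \<lambda>k\<in>{1..}. \<xi> k \<omega>)"
  have Xim[measurable]: "Xi \<in> M \<rightarrow>\<^sub>M PiM {1..} (\<lambda>_. P)" using Xi by (simp add: Xi_def)
  define g where "g = (\<lambda>z. f (S dg \<alpha> k (fst z) (snd z)))"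
  have Sm: "(\<lambda>(b, t). S dg \<alpha> k b t) \<in> borel_measurable (borel \<Otimes>\<^sub>M PiM {1..} (\<lambda>_. P))"
    by (rule S_meas[OF dg_meas]) auto
  have gm[measurable]: "g \<in> borel_measurable (borel \<Otimes>\<^sub>M PiM {1..} (\<lambda>_. P))"
    unfolding g_def using measurable_compose[OF Sm f] by (simp add: case_prod_beta')
  have sgdS: "sgd dg \<alpha> \<xi> B0 k \<omega> = S dg \<alpha> k (B0 \<omega>) (Xi \<omega>)" for B0 \<omega>
    unfolding sgd_eq_S Xi_def by (rule S_cong) auto
  have "(\<integral>\<^sup>+ \<omega>. f (sgd dg \<alpha> \<xi> b0c k \<omega>) \<partial>M) = (\<integral>\<^sup>+ \<omega>. g (b0c \<omega>, Xi \<omega>) \<partial>M)"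
    by (simp add: g_def sgdS)
  also have "\<dots> = (\<integral>\<^sup>+ \<omega>'. (\<integral>\<^sup>+ t. g (b0c \<omega>', t) \<partial>distr M (PiM {1..} (\<lambda>_. P)) Xi) \<partial>M)"
    by (rule nn_integral_indep[OF Mp b0c Xim _ gm]) (use ind in \<open>simp add: Xi_def\<close>)
  also have "\<dots> = (\<integral>\<^sup>+ \<omega>'. (\<integral>\<^sup>+ \<omega>. g (b0c \<omega>', Xi \<omega>) \<partial>M) \<partial>M)"
  proof (rule nn_integral_cong)
    fix \<omega>'
    have "(\<lambda>t. g (b0c \<omega>', t)) \<in> borel_measurable (PiM {1..} (\<lambda>_. P))" by measurable
    then show "(\<integral>\<^sup>+ t. g (b0c \<omega>', t) \<partial>distr M (PiM {1..} (\<lambda>_. P)) Xi) = (\<integral>\<^sup>+ \<omega>. g (b0c \<omega>', Xi \<omega>) \<partial>M)"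
      by (intro nn_integral_distr[OF Xim]) (simp cong: measurable_cong_sets)
  qed
  also have "\<dots> = (\<integral>\<^sup>+ \<omega>'. (\<integral>\<^sup>+ \<omega>. f (sgd dg \<alpha> \<xi> (\<lambda>_. b0c \<omega>') k \<omega>) \<partial>M) \<partial>M)"
    by (simp add: g_def sgdS)
  finally show ?thesis .
qed

theorem mainTheorem2:
  fixes M :: "'a measure" and P :: "'x measure"
    and \<xi> :: "nat \<Rightarrow> 'a \<Rightarrow> 'x"
    and g :: "real^'d \<Rightarrow> 'x \<Rightarrow> real" and dg :: "real^'d \<Rightarrow> 'x \<Rightarrow> real^'d"
    and G :: "real^'d \<Rightarrow> real" and dG :: "real^'d \<Rightarrow> real^'d"
    and s :: nat and q \<mu> L \<alpha> :: real
    and bstar b0 :: "real^'d"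
    and \<pi> :: "(real^'d) measure" and b0c :: "'a \<Rightarrow> real^'d"
  assumes M: "prob_space M" and P: "prob_space P"
    \<comment> \<open>i.i.d. samples xi_1, xi_2, ... with law P\<close>
    and xi_indep: "prob_space.indep_vars M (\<lambda>_. P) \<xi> {1..}"
    and xi_law: "\<And>k. k \<ge> 1 \<Longrightarrow> distr M P (\<xi> k) = P"
    \<comment> \<open>g differentiable in beta with gradient dg; dg jointly measurable\<close>
    and g_deriv: "\<And>x b. x \<in> space P \<Longrightarrow> ((\<lambda>b'. g b' x) has_derivative (\<lambda>h. dg b x \<bullet> h)) (at b)"
    and dg_meas: "(\<lambda>(b, x). dg b x) \<in> borel_measurable (borel \<Otimes>\<^sub>M P)"
    \<comment> \<open>G = E g, differentiable with gradient E grad g\<close>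
    and g_int: "\<And>b. integrable P (g b)"
    and G_def: "\<And>b. G b = (\<integral>x. g b x \<partial>P)"
    and G_deriv: "\<And>b. (G has_derivative (\<lambda>h. dG b \<bullet> h)) (at b)"
    and dG_def: "\<And>b. dG b = (\<integral>x. dg b x \<partial>P)"
    \<comment> \<open>parameters\<close>
    and q: "q \<ge> 2" and s: "s \<ge> 2" "even s"
    \<comment> \<open>A1: coercivity\<close>
    and A1: "\<And>b :: nat \<Rightarrow> real^'d. filterlim (\<lambda>n. lsnorm s (b n)) at_top sequentially
               \<Longrightarrow> filterlim (\<lambda>n. G (b n)) at_top sequentially"
    \<comment> \<open>A2(s, mu)\<close>
    and mu: "\<mu> > 0"
    and A2: "\<And>b b'. odot_pow (b - b') (s - 1) \<bullet> (dG b - dG b') \<ge> \<mu> * lsnorm s (b - b') ^ s"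
    \<comment> \<open>bstar: the (unique) global minimiser of G\<close>
    and bstar: "\<And>b. G bstar \<le> G b"
    \<comment> \<open>A3(s, q)\<close>
    and A3_M: "integrable P (\<lambda>x. \<bar>lsnorm s (dg bstar x)\<bar> powr q)"
    and L: "L > 0"
    and A3_L_int: "\<And>b b'. integrable P (\<lambda>x. \<bar>lsnorm s (dg b x - dg b' x)\<bar> powr q)"
    and A3_L: "\<And>b b'. lq_norm P q (\<lambda>x. lsnorm s (dg b x - dg b' x)) \<le> L * lsnorm s (b - b')"
    \<comment> \<open>learning rate\<close>
    and alpha: "\<alpha> > 0"
  shows "(\<forall>k \<ge> 1.
           lq_norm M q (\<lambda>\<omega>. lsnorm s (sgd dg \<alpha> \<xi> (\<lambda>_. b0) k \<omega> - bstar)) ^ 2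
         \<le> (1 - 2 * \<alpha> * \<mu> + 7 * max q (real s) * \<alpha>\<^sup>2 * L\<^sup>2)
             * lq_norm M q (\<lambda>\<omega>. lsnorm s (sgd dg \<alpha> \<xi> (\<lambda>_. b0) (k - 1) \<omega> - bstar)) ^ 2
           + 3 * max q (real s) * \<alpha>\<^sup>2 * (lq_norm P q (\<lambda>x. lsnorm s (dg bstar x))) ^ 2)
    \<and> (( \<alpha> < 2 * \<mu> / (max q (real s) * L\<^sup>2)
           \<and> prob_space \<pi>
           \<and> sets \<pi> = sets borel
           \<and> distr (\<pi> \<Otimes>\<^sub>M P) borel (\<lambda>(b, x). b - \<alpha> *\<^sub>R dg b x) = \<pi>
           \<and> integrable \<pi> (\<lambda>u. lsnorm s u powr q)
           \<and> distr M borel b0c = \<pi>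
           \<and> b0c \<in> borel_measurable M
           \<and> prob_space.indep_set M {b0c -` A \<inter> space M | A. A \<in> sets borel}
             {(\<lambda>\<omega>. \<lambda>k\<in>{1..}. \<xi> k \<omega>) -` A \<inter> space M | A. A \<in> sets (\<Pi>\<^sub>M k\<in>{1..}. P)} )
         \<longrightarrow> (\<forall>k \<ge> 1.
           lq_norm M q (\<lambda>\<omega>. lsnorm s (sgd dg \<alpha> \<xi> b0c k \<omega> - bstar)) ^ 2
         \<le> (1 - 2 * \<alpha> * \<mu> + 7 * max q (real s) * \<alpha>\<^sup>2 * L\<^sup>2)
             * lq_norm M q (\<lambda>\<omega>. lsnorm s (sgd dg \<alpha> \<xi> b0c (k - 1) \<omega> - bstar)) ^ 2
           + 3 * max q (real s) * \<alpha>\<^sup>2 * (lq_norm P q (\<lambda>x. lsnorm s (dg bstar x))) ^ 2))"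
proof -
  interpret Mp: prob_space M by (rule M)
  interpret Pp: prob_space P by (rule P)
  define m where "m = max q (real s)"
  define Mq where "Mq = lq_norm P q (\<lambda>x. lsnorm s (dg bstar x))"
  define c where "c = 1 - 2 * \<alpha> * \<mu> + 7 * m * \<alpha>\<^sup>2 * L\<^sup>2"
  define K where "K = 3 * m * \<alpha>\<^sup>2 * Mq\<^sup>2"
  have m2: "m \<ge> 2" using q by (simp add: m_def)
  have K0: "K \<ge> 0" using m2 by (simp add: K_def)
  have dGstar: "dG bstar = 0"
  proof -
    have "(\<lambda>h. dG bstar \<bullet> h) = (\<lambda>h. 0)"
      by (rule has_derivative_local_min[OF G_deriv[of bstar]]) (simp add: bstar always_eventually)
    then have "dG bstar \<bullet> dG bstar = 0" by meson
    then show ?thesis by simp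
  qed
  note DK = dk[OF P dg_meas dG_def q s mu A2 dGstar A3_M L A3_L_int A3_L alpha]
  define \<Phi> where "\<Phi> = (\<lambda>\<beta>. \<integral>x. lsnorm s (\<beta> - \<alpha> *\<^sub>R dg \<beta> x - bstar) powr q \<partial>P)"
  have \<Phi>0: "\<Phi> \<beta> \<ge> 0" for \<beta> unfolding \<Phi>_def by (intro integral_nonneg_AE) auto
  have DK2: "\<Phi> \<beta> powr (2/q) \<le> c * (lsnorm s (\<beta> - bstar))\<^sup>2 + K" for \<beta>
    using DK(2)[of \<beta>] by (simp add: \<Phi>_def c_def K_def m_def Mq_def)
  have c0: "c \<ge> 0"
  proof (rule ccontr)
    assume "\<not> c \<ge> 0"
    then have cn: "c < 0" by simp
    define e :: "real^'d" where "e = (\<chi> i. 1)"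
    have "e \<noteq> 0" by (simp add: e_def vec_eq_iff)
    then have Ne: "lsnorm s e > 0" using lsnorm_eq_0_iff[of s e] lsnorm_nonneg[of s e] s by auto
    define u where "u = sqrt ((K + 1) / (- c))"
    have "(K + 1) / c \<le> 0" using cn K0 by (intro divide_nonneg_neg) auto
    then have kc: "(K + 1) / (- c) \<ge> 0" by simp
    then have u0: "u \<ge> 0" by (simp add: u_def)
    from kc have u2: "u\<^sup>2 = (K + 1) / (- c)" by (simp add: u_def)
    define \<beta> where "\<beta> = bstar + (u / lsnorm s e) *\<^sub>R e"
    have "lsnorm s (\<beta> - bstar) = \<bar>u / lsnorm s e\<bar> * lsnorm s e" using s by (simp add: \<beta>_def lsnorm_scale)
    also have "\<dots> = u" using u0 Ne by simp
    finally have Nb: "lsnorm s (\<beta> - bstar) = u" .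
    have "c * (lsnorm s (\<beta> - bstar))\<^sup>2 + K = c * ((K + 1) / (- c)) + K" by (simp add: Nb u2)
    also have "\<dots> = -1" using cn by (simp add: field_simps)
    finally have "\<Phi> \<beta> powr (2/q) \<le> -1" using DK2[of \<beta>] by simp
    moreover have "\<Phi> \<beta> powr (2/q) \<ge> 0" by simp
    ultimately show False by simp
  qed
  have \<Phi>le: "\<Phi> \<beta> \<le> (c * (lsnorm s (\<beta> - bstar))\<^sup>2 + K) powr (q / 2)" for \<beta>
  proof -
    have "\<Phi> \<beta> = (\<Phi> \<beta> powr (2/q)) powr (q/2)" using \<Phi>0[of \<beta>] q by (simp add: powr_powr)
    also have "\<dots> \<le> (c * (lsnorm s (\<beta> - bstar))\<^sup>2 + K) powr (q / 2)"
      using DK2[of \<beta>] q by (intro powr_mono2) auto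
    finally show ?thesis .
  qed
  define f where "f = (\<lambda>y. ennreal (lsnorm s (y - bstar) powr q))"
  define f' where "f' = (\<lambda>y. \<integral>\<^sup>+ x. f (y - \<alpha> *\<^sub>R dg y x) \<partial>P)"
  have fm[measurable]: "f \<in> borel_measurable borel" unfolding f_def by measurable
  have dgm[measurable]: "(\<lambda>z. dg (fst z) (snd z)) \<in> borel_measurable (borel \<Otimes>\<^sub>M P)"
    using dg_meas by (simp add: case_prod_beta')
  have f'm[measurable]: "f' \<in> borel_measurable borel"
  proof -
    have "(\<lambda>z. f (fst z - \<alpha> *\<^sub>R dg (fst z) (snd z))) \<in> borel_measurable (borel \<Otimes>\<^sub>M P)" by measurable
    from Pp.borel_measurable_nn_integral_fst[OF this] show ?thesis by (simp add: f'_def)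
  qed
  have f'\<Phi>: "f' y = ennreal (\<Phi> y)" for y
    unfolding f'_def f_def \<Phi>_def by (rule nn_integral_eq_integral[OF DK(1)]) auto
  have xim: "\<xi> k \<in> M \<rightarrow>\<^sub>M P" if "k \<ge> 1" for k
    using xi_indep that unfolding Mp.indep_vars_def by auto
  have sgdm: "sgd dg \<alpha> \<xi> B0 j \<in> borel_measurable M" if B0: "B0 \<in> borel_measurable M" for B0 j
  proof (induction j)
    case 0 then show ?case using B0 by simp
  next
    case (Suc j)
    have pr: "(\<lambda>\<omega>. (sgd dg \<alpha> \<xi> B0 j \<omega>, \<xi> (Suc j) \<omega>)) \<in> M \<rightarrow>\<^sub>M borel \<Otimes>\<^sub>M P"
      by (rule measurable_Pair[OF Suc.IH xim]) simp
    have "(\<lambda>\<omega>. dg (sgd dg \<alpha> \<xi> B0 j \<omega>) (\<xi> (Suc j) \<omega>)) \<in> borel_measurable M"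
      using measurable_compose[OF pr dg_meas] by simp
    then show ?case using Suc.IH by simp
  qed
  have part1: "\<forall>k \<ge> 1. (lq_norm M q (\<lambda>\<omega>. lsnorm s (sgd dg \<alpha> \<xi> (\<lambda>_. b0) k \<omega> - bstar)))\<^sup>2
            \<le> c * (lq_norm M q (\<lambda>\<omega>. lsnorm s (sgd dg \<alpha> \<xi> (\<lambda>_. b0) (k - 1) \<omega> - bstar)))\<^sup>2 + K"
  proof (rule sgd_chain[OF M c0 K0 q _ \<Phi>0 \<Phi>le])
    show "sgd dg \<alpha> \<xi> (\<lambda>_. b0) j \<in> borel_measurable M" for j by (rule sgdm) simp
    show "integrable M (\<lambda>\<omega>. lsnorm s (sgd dg \<alpha> \<xi> (\<lambda>_. b0) 0 \<omega> - bstar) powr q)" by simp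
    fix j
    have "(\<integral>\<^sup>+ \<omega>. f (sgd dg \<alpha> \<xi> (\<lambda>_. b0) (Suc j) \<omega>) \<partial>M) = (\<integral>\<^sup>+ \<omega>. f' (sgd dg \<alpha> \<xi> (\<lambda>_. b0) j \<omega>) \<partial>M)"
      unfolding f'_def by (rule step_identity[OF M P xi_indep xi_law dg_meas fm])
    then show "(\<integral>\<^sup>+ \<omega>. ennreal (lsnorm s (sgd dg \<alpha> \<xi> (\<lambda>_. b0) (Suc j) \<omega> - bstar) powr q) \<partial>M)
        = (\<integral>\<^sup>+ \<omega>. ennreal (\<Phi> (sgd dg \<alpha> \<xi> (\<lambda>_. b0) j \<omega>)) \<partial>M)"
      by (simp add: f_def f'\<Phi>)
  qed
  have part2: "\<forall>k \<ge> 1. (lq_norm M q (\<lambda>\<omega>. lsnorm s (sgd dg \<alpha> \<xi> b0c k \<omega> - bstar)))\<^sup>2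
            \<le> c * (lq_norm M q (\<lambda>\<omega>. lsnorm s (sgd dg \<alpha> \<xi> b0c (k - 1) \<omega> - bstar)))\<^sup>2 + K"
    if hyp: "prob_space \<pi>" "sets \<pi> = sets borel" "integrable \<pi> (\<lambda>u. lsnorm s u powr q)"
      "distr M borel b0c = \<pi>" "b0c \<in> borel_measurable M"
      "prob_space.indep_set M {b0c -` A \<inter> space M | A. A \<in> sets borel}
             {(\<lambda>\<omega>. \<lambda>k\<in>{1..}. \<xi> k \<omega>) -` A \<inter> space M | A. A \<in> sets (\<Pi>\<^sub>M k\<in>{1..}. P)}"
  proof (rule sgd_chain[OF M c0 K0 q _ \<Phi>0 \<Phi>le])
    have b0cm[measurable]: "b0c \<in> borel_measurable M" by (rule hyp(5))
    have Xi: "(\<lambda>\<omega>. \<lambda>k\<in>{1..}. \<xi> k \<omega>) \<in> M \<rightarrow>\<^sub>M PiM {1..} (\<lambda>_. P)"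
      by (rule measurable_restrict) (use xim in auto)
    show "sgd dg \<alpha> \<xi> b0c j \<in> borel_measurable M" for j by (rule sgdm) (rule hyp(5))
    show "integrable M (\<lambda>\<omega>. lsnorm s (sgd dg \<alpha> \<xi> b0c 0 \<omega> - bstar) powr q)"
    proof -
      have "integrable (distr M borel b0c) (\<lambda>u. lsnorm s u powr q)" using hyp(3) hyp(4) by simp
      then have i1: "integrable M (\<lambda>\<omega>. lsnorm s (b0c \<omega>) powr q)"
        by (subst (asm) integrable_distr_eq) auto
      have i2: "integrable M (\<lambda>\<omega>. lsnorm s (- bstar) powr q)" by simp
      have "integrable M (\<lambda>\<omega>. (lsnorm s (b0c \<omega>) + lsnorm s (- bstar)) powr q)"
        by (rule integrable_powr_sum[OF _ _ _ _ _ i1 i2]) (use q in \<open>auto simp: lsnorm_nonneg\<close>)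
      then show ?thesis
      proof (rule Bochner_Integration.integrable_bound)
        show "AE \<omega> in M. norm (lsnorm s (sgd dg \<alpha> \<xi> b0c 0 \<omega> - bstar) powr q) \<le> norm ((lsnorm s (b0c \<omega>) + lsnorm s (- bstar)) powr q)"
        proof (intro AE_I2)
          fix \<omega>
          have "lsnorm s (b0c \<omega> - bstar) \<le> lsnorm s (b0c \<omega>) + lsnorm s (- bstar)"
            using lsnorm_triangle[OF s(1), of "b0c \<omega>" "- bstar"] by simp
          then show "norm (lsnorm s (sgd dg \<alpha> \<xi> b0c 0 \<omega> - bstar) powr q) \<le> norm ((lsnorm s (b0c \<omega>) + lsnorm s (- bstar)) powr q)"
            using q by (auto simp: lsnorm_nonneg intro!: powr_mono2)
        qed
      qed (simp only: sgd.simps, measurable)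
    qed
    fix j
    note D = b0c_decomp[OF M b0cm Xi hyp(6) dg_meas]
    have "(\<integral>\<^sup>+ \<omega>. f (sgd dg \<alpha> \<xi> b0c (Suc j) \<omega>) \<partial>M) = (\<integral>\<^sup>+ \<omega>'. (\<integral>\<^sup>+ \<omega>. f (sgd dg \<alpha> \<xi> (\<lambda>_. b0c \<omega>') (Suc j) \<omega>) \<partial>M) \<partial>M)"
      by (rule D[OF fm])
    also have "\<dots> = (\<integral>\<^sup>+ \<omega>'. (\<integral>\<^sup>+ \<omega>. f' (sgd dg \<alpha> \<xi> (\<lambda>_. b0c \<omega>') j \<omega>) \<partial>M) \<partial>M)"
      unfolding f'_def by (intro nn_integral_cong step_identity[OF M P xi_indep xi_law dg_meas fm])
    also have "\<dots> = (\<integral>\<^sup>+ \<omega>. f' (sgd dg \<alpha> \<xi> b0c j \<omega>) \<partial>M)"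
      by (rule D[OF f'm, symmetric])
    finally show "(\<integral>\<^sup>+ \<omega>. ennreal (lsnorm s (sgd dg \<alpha> \<xi> b0c (Suc j) \<omega> - bstar) powr q) \<partial>M)
        = (\<integral>\<^sup>+ \<omega>. ennreal (\<Phi> (sgd dg \<alpha> \<xi> b0c j \<omega>)) \<partial>M)"
      by (simp add: f_def f'\<Phi>)
  qed
  show ?thesis
  proof (intro conjI impI)
    show "\<forall>k\<ge>1. lq_norm M q (\<lambda>\<omega>. lsnorm s (sgd dg \<alpha> \<xi> (\<lambda>_. b0) k \<omega> - bstar)) ^ 2
         \<le> (1 - 2 * \<alpha> * \<mu> + 7 * max q (real s) * \<alpha>\<^sup>2 * L\<^sup>2)
             * lq_norm M q (\<lambda>\<omega>. lsnorm s (sgd dg \<alpha> \<xi> (\<lambda>_. b0) (k - 1) \<omega> - bstar)) ^ 2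
           + 3 * max q (real s) * \<alpha>\<^sup>2 * (lq_norm P q (\<lambda>x. lsnorm s (dg bstar x))) ^ 2"
      using part1 by (simp add: c_def K_def m_def Mq_def)
  next
    assume H: "\<alpha> < 2 * \<mu> / (max q (real s) * L\<^sup>2) \<and> prob_space \<pi> \<and> sets \<pi> = sets borel
           \<and> distr (\<pi> \<Otimes>\<^sub>M P) borel (\<lambda>(b, x). b - \<alpha> *\<^sub>R dg b x) = \<pi>
           \<and> integrable \<pi> (\<lambda>u. lsnorm s u powr q) \<and> distr M borel b0c = \<pi> \<and> b0c \<in> borel_measurable M
           \<and> prob_space.indep_set M {b0c -` A \<inter> space M | A. A \<in> sets borel}
             {(\<lambda>\<omega>. \<lambda>k\<in>{1..}. \<xi> k \<omega>) -` A \<inter> space M | A. A \<in> sets (\<Pi>\<^sub>M k\<in>{1..}. P)}"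
    show "\<forall>k\<ge>1. lq_norm M q (\<lambda>\<omega>. lsnorm s (sgd dg \<alpha> \<xi> b0c k \<omega> - bstar)) ^ 2
         \<le> (1 - 2 * \<alpha> * \<mu> + 7 * max q (real s) * \<alpha>\<^sup>2 * L\<^sup>2)
             * lq_norm M q (\<lambda>\<omega>. lsnorm s (sgd dg \<alpha> \<xi> b0c (k - 1) \<omega> - bstar)) ^ 2
           + 3 * max q (real s) * \<alpha>\<^sup>2 * (lq_norm P q (\<lambda>x. lsnorm s (dg bstar x))) ^ 2"
      using part2 H by (simp add: c_def K_def m_def Mq_def)
  qed
qed

end
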